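(* Let $X=\Delta([a,b])^S$. There is a sequence of experiments $\Sigma_\infty=\{B_i\}_{i\in\mathbf N}$ (satisfying the standing assumptions below) with the following property: whenever $\succeq^*$ is a continuous, weakly monotone preference on $X$, and for each $k\in\mathbf N$, $\succeq^k$ is a continuous, weakly monotone preference on $X$ that strongly rationalizes the choice function $(\Sigma_k,c_{\succeq^*})$ generated by $\succeq^*$, then $\succeq^k\to\succeq^*$ in the topology of closed convergence.
   Context: $S$ is a finite nonempty set, $a<b$ reals, $\Delta([a,b])$ the set of Borel probability measures on $[a,b]$ with the topology of weak convergence, $X=\Delta([a,b])^S$ with the product topology. For $p,q\in\Delta([a,b])$, $p\ge q$ means $p$ first-order stochastically dominates $q$ ($\int h\,dp\ge\int h\,dq$ for all bounded continuous nondecreasing $h$); for acts $f\ge g$ iff $f(s)\ge g(s)$ for every $s$. A preference on $X$ is a complete, transitive relation closed in $X\times X$; it is weakly monotone if $f\ge g$ implies $f\succeq g$. A sequence of experiments is a sequence $\Sigma_\infty=\{B_i\}_{i\in\mathbf N}$ of unordered pairs $B_i=\{x_i,y_i\}\subseteq X$; $\Sigma_k=\{B_1,\dots,B_k\}$, and $B=\bigcup_i B_i$. Standing assumptions: $B$ is dense in $X$, and for any $x,y\in B$ there is $k$ with $B_k=\{x,y\}$. For a preference $\succeq$ and a family $\Sigma$ of finite sets, the generated choice function is $c_\succeq(A)=\{x\in A:x\succeq y\ \forall y\in A\}$, $A\in\Sigma$. A preference $\succeq^k$ strongly rationalizes a choice function $(\Sigma_k,c)$ if $c(B_i)=c_{\succeq^k}(B_i)$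 for all $B_i\in\Sigma_k$. Closed convergence: for closed sets $F^n\subseteq X\times X$, $\mathrm{Li}$ is the set of points every neighborhood of which meets $F^n$ for all large $n$, $\mathrm{Ls}$ the set of points every neighborhood of which meets $F^n$ for infinitely many $n$; $F^n\to F$ iff $\mathrm{Li}=F=\mathrm{Ls}$. *)

theory Defs
  imports "HOL-Probability.Probability"
begin

text \<open>Borel probability measures on [a,b], represented as Borel probability
measures on the real line giving full mass to [a,b].\<close>
definition Delta :: "real \<Rightarrow> real \<Rightarrow> real measure set" where
  "Delta a b = {p. sets p = sets borel \<and> prob_space p \<and> emeasure p {a..b} = 1}"

definition weak_top :: "real \<Rightarrow> real \<Rightarrow> real measure topology" where
  "weak_top a b = topology_generated_by
     {{p \<in> Delta a b. integral\<^sup>L p h \<in> U} | (h :: real \<Rightarrow> real) U.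
        continuous_on UNIV h \<and> bounded (range h) \<and> open U}"

definition act_top :: "real \<Rightarrow> real \<Rightarrow> ('s \<Rightarrow> real measure) topology" where
  "act_top a b = product_topology (\<lambda>_. weak_top a b) UNIV"

definition fosd :: "real measure \<Rightarrow> real measure \<Rightarrow> bool" where
  "fosd p q \<longleftrightarrow> (\<forall>h::real \<Rightarrow> real. continuous_on UNIV h \<and> bounded (range h) \<and> mono h
      \<longrightarrow> integral\<^sup>L p h \<ge> integral\<^sup>L q h)"

definition act_ge :: "('s \<Rightarrow> real measure) \<Rightarrow> ('s \<Rightarrow> real measure) \<Rightarrow> bool" where
  "act_ge f g \<longleftrightarrow> (\<forall>s. fosd (f s) (g s))"

text \<open>A preference on topological space T: complete, transitive, closed in T x T.
(x,y) in R means x is weakly preferred to y.\<close>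
definition preference :: "'a topology \<Rightarrow> ('a \<times> 'a) set \<Rightarrow> bool" where
  "preference T R \<longleftrightarrow> R \<subseteq> topspace T \<times> topspace T
     \<and> (\<forall>x\<in>topspace T. \<forall>y\<in>topspace T. (x,y) \<in> R \<or> (y,x) \<in> R)
     \<and> trans R
     \<and> closedin (prod_topology T T) R"

definition weakly_monotone :: "real \<Rightarrow> real \<Rightarrow> (('s \<Rightarrow> real measure) \<times> ('s \<Rightarrow> real measure)) set \<Rightarrow> bool" where
  "weakly_monotone a b R \<longleftrightarrow> (\<forall>f\<in>topspace (act_top a b). \<forall>g\<in>topspace (act_top a b).
      act_ge f g \<longrightarrow> (f,g) \<in> R)"

definition choice :: "('a \<times> 'a) set \<Rightarrow> 'a set \<Rightarrow> 'a set" where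
  "choice R A = {x\<in>A. \<forall>y\<in>A. (x,y) \<in> R}"

definition Li :: "'a topology \<Rightarrow> (nat \<Rightarrow> 'a set) \<Rightarrow> 'a set" where
  "Li T F = {z\<in>topspace T. \<forall>U. openin T U \<and> z \<in> U \<longrightarrow> (\<forall>\<^sub>F n in sequentially. F n \<inter> U \<noteq> {})}"

definition Ls :: "'a topology \<Rightarrow> (nat \<Rightarrow> 'a set) \<Rightarrow> 'a set" where
  "Ls T F = {z\<in>topspace T. \<forall>U. openin T U \<and> z \<in> U \<longrightarrow> (\<exists>\<^sub>F n in sequentially. F n \<inter> U \<noteq> {})}"

definition closed_conv :: "'a topology \<Rightarrow> (nat \<Rightarrow> 'a set) \<Rightarrow> 'a set \<Rightarrow> bool" where
  "closed_conv T F G \<longleftrightarrow> Li T F = G \<and> Ls T F = G"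

end

theory Submission
  imports Defs
begin


definition bcont :: "(real \<Rightarrow> real) \<Rightarrow> bool" where
  "bcont h \<longleftrightarrow> continuous_on UNIV h \<and> bounded (range h)"

lemma Delta_prob: "p \<in> Delta a b \<Longrightarrow> prob_space p"
  by (simp add: Delta_def)

lemma Delta_sets: "p \<in> Delta a b \<Longrightarrow> sets p = sets borel"
  by (simp add: Delta_def)

lemma Delta_AE:
  assumes "p \<in> Delta a b" shows "AE x in p. x \<in> {a..b}"
proof -
  interpret prob_space p using assms by (simp add: Delta_def)
  have "{a..b} \<in> sets p" using assms by (simp add: Delta_def)
  moreover have "emeasure p {a..b} = 1" using assms by (simp add: Delta_def)
  ultimately show ?thesis
    by (intro AE_prob_1) (auto simp: emeasure_eq_measure)
qed

lemma bcont_meas: assumes "bcont h" "p \<in> Delta a b" shows "h \<in> borel_measurable p"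
proof -
  have "h \<in> borel_measurable borel" using assms(1) by (simp add: bcont_def borel_measurable_continuous_onI)
  then show ?thesis by (simp only: measurable_cong_sets[OF Delta_sets[OF assms(2)] refl])
qed

lemma bcont_bound: "bcont h \<Longrightarrow> \<exists>B. \<forall>x. \<bar>h x\<bar> \<le> B"
  unfolding bcont_def bounded_iff by auto

lemma Delta_integrable:
  assumes "p \<in> Delta a b" "bcont h" shows "integrable p h"
proof -
  interpret prob_space p using assms by (simp add: Delta_def)
  obtain B where "\<forall>x. \<bar>h x\<bar> \<le> B" using bcont_bound assms(2) by blast
  then show ?thesis using bcont_meas[OF assms(2,1)]
    by (intro integrable_const_bound[where B=B]) auto
qed

lemma Delta_int_mono:
  assumes "p \<in> Delta a b" "bcont f" "bcont g" "\<And>x. x \<in> {a..b} \<Longrightarrow> f x \<le> g x"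
  shows "integral\<^sup>L p f \<le> integral\<^sup>L p g"
  using Delta_AE[OF assms(1)] assms
  by (intro integral_mono_AE Delta_integrable) (auto elim: AE_mp)

lemma Delta_int_const: assumes "p \<in> Delta a b" shows "integral\<^sup>L p (\<lambda>x. c) = (c::real)"
proof -
  interpret prob_space p using assms by (simp add: Delta_def)
  show ?thesis by (simp add: prob_space)
qed

lemma Delta_int_abs:
  assumes "p \<in> Delta a b" "bcont f" "\<And>x. x \<in> {a..b} \<Longrightarrow> \<bar>f x\<bar> \<le> B"
  shows "\<bar>integral\<^sup>L p f\<bar> \<le> B"
proof -
  have "integral\<^sup>L p f \<le> integral\<^sup>L p (\<lambda>x. B)"
    using assms by (intro Delta_int_mono) (auto simp: bcont_def abs_le_iff)
  moreover have "integral\<^sup>L p (\<lambda>x. -B) \<le> integral\<^sup>L p f"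
    using assms by (intro Delta_int_mono) (auto simp: bcont_def, metis abs_le_iff minus_le_iff)
  ultimately show ?thesis using Delta_int_const[OF assms(1), of B] Delta_int_const[OF assms(1), of "-B"] by auto
qed




lemma topspace_weak: "topspace (weak_top a b) = Delta a b"
proof -
  have "Delta a b \<in> {{p \<in> Delta a b. integral\<^sup>L p h \<in> U} | (h :: real \<Rightarrow> real) U.
        continuous_on UNIV h \<and> bounded (range h) \<and> open U}"
    by (rule CollectI, rule exI[of _ "\<lambda>x. 0"], rule exI[of _ UNIV]) auto
  then show ?thesis unfolding weak_top_def topology_generated_by_topspace by auto
qed

lemma weak_basic_open:
  assumes "bcont h" "open V"
  shows "openin (weak_top a b) {p \<in> Delta a b. integral\<^sup>L p h \<in> V}"
  unfolding weak_top_def using assms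
  by (intro topology_generated_by_Basis) (auto simp: bcont_def)

lemma weak_finite_open:
  assumes "finite I" "\<And>i. i \<in> I \<Longrightarrow> bcont (f i)" "\<And>i. i \<in> I \<Longrightarrow> open (V i)"
  shows "openin (weak_top a b) {q \<in> Delta a b. \<forall>i\<in>I. integral\<^sup>L q (f i) \<in> V i}"
proof -
  have "openin (weak_top a b) ((\<Inter>i\<in>I. {p \<in> Delta a b. integral\<^sup>L p (f i) \<in> V i}) \<inter> topspace (weak_top a b))"
    using assms by (intro openin_INT weak_basic_open) auto
  moreover have "(\<Inter>i\<in>I. {p \<in> Delta a b. integral\<^sup>L p (f i) \<in> V i}) \<inter> topspace (weak_top a b)
     = {q \<in> Delta a b. \<forall>i\<in>I. integral\<^sup>L q (f i) \<in> V i}"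
    by (auto simp: topspace_weak)
  ultimately show ?thesis by simp
qed

lemma weak_nbhd:
  assumes "openin (weak_top a b) U" "p \<in> U"
  shows "\<exists>H e. finite H \<and> (\<forall>h\<in>H. bcont h) \<and> e > 0 \<and>
     {q \<in> Delta a b. \<forall>h\<in>H. \<bar>integral\<^sup>L q h - integral\<^sup>L p h\<bar> < e} \<subseteq> U"
proof -
  have "generate_topology_on {{p \<in> Delta a b. integral\<^sup>L p h \<in> U} | (h :: real \<Rightarrow> real) U.
        continuous_on UNIV h \<and> bounded (range h) \<and> open U} U"
    using assms(1) unfolding weak_top_def by (rule openin_topology_generated_by)
  then have "\<forall>p\<in>U. \<exists>H e. finite H \<and> (\<forall>h\<in>H. bcont h) \<and> e > 0 \<and>
     {q \<in> Delta a b. \<forall>h\<in>H. \<bar>integral\<^sup>L q h - integral\<^sup>L p h\<bar> < e} \<subseteq> U"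
  proof induction
    case Empty
    then show ?case by auto
  next
    case (Int A C)
    show ?case
    proof
      fix p assume pAC: "p \<in> A \<inter> C"
      then have pA: "p \<in> A" and pC: "p \<in> C" by auto
      from bspec[OF Int.IH(1) pA] obtain H1 e1 where h1: "finite H1" "\<forall>h\<in>H1. bcont h" "e1 > 0"
        "{q \<in> Delta a b. \<forall>h\<in>H1. \<bar>integral\<^sup>L q h - integral\<^sup>L p h\<bar> < e1} \<subseteq> A"
        by blast
      from bspec[OF Int.IH(2) pC] obtain H2 e2 where h2: "finite H2" "\<forall>h\<in>H2. bcont h" "e2 > 0"
        "{q \<in> Delta a b. \<forall>h\<in>H2. \<bar>integral\<^sup>L q h - integral\<^sup>L p h\<bar> < e2} \<subseteq> C"
        by blast
      show "\<exists>H e. finite H \<and> (\<forall>h\<in>H. bcont h) \<and> e > 0 \<and>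
         {q \<in> Delta a b. \<forall>h\<in>H. \<bar>integral\<^sup>L q h - integral\<^sup>L p h\<bar> < e} \<subseteq> A \<inter> C"
      proof (intro exI[of _ "H1 \<union> H2"] exI[of _ "min e1 e2"] conjI)
        show "finite (H1 \<union> H2)" using h1(1) h2(1) by simp
        show "\<forall>h\<in>H1 \<union> H2. bcont h" using h1(2) h2(2) by blast
        show "0 < min e1 e2" using h1(3) h2(3) by simp
        show "{q \<in> Delta a b. \<forall>h\<in>H1 \<union> H2. \<bar>integral\<^sup>L q h - integral\<^sup>L p h\<bar> < min e1 e2} \<subseteq> A \<inter> C"
        proof
          fix q assume q: "q \<in> {q \<in> Delta a b. \<forall>h\<in>H1 \<union> H2. \<bar>integral\<^sup>L q h - integral\<^sup>L p h\<bar> < min e1 e2}"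
          then have "q \<in> {q \<in> Delta a b. \<forall>h\<in>H1. \<bar>integral\<^sup>L q h - integral\<^sup>L p h\<bar> < e1}" by auto
          moreover have "q \<in> {q \<in> Delta a b. \<forall>h\<in>H2. \<bar>integral\<^sup>L q h - integral\<^sup>L p h\<bar> < e2}" using q by auto
          ultimately show "q \<in> A \<inter> C" using h1(4) h2(4) by blast
        qed
      qed
    qed
  next
    case (UN K)
    show ?case
    proof
      fix p assume "p \<in> \<Union>K"
      then obtain k where "k \<in> K" "p \<in> k" by auto
      from bspec[OF UN.IH[OF \<open>k \<in> K\<close>] \<open>p \<in> k\<close>] obtain H e where
        H: "finite H" "\<forall>h\<in>H. bcont h" "e > 0"
        "{q \<in> Delta a b. \<forall>h\<in>H. \<bar>integral\<^sup>L q h - integral\<^sup>L p h\<bar> < e} \<subseteq> k"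
        by blast
      have "k \<subseteq> \<Union>K" using \<open>k \<in> K\<close> by blast
      then have "{q \<in> Delta a b. \<forall>h\<in>H. \<bar>integral\<^sup>L q h - integral\<^sup>L p h\<bar> < e} \<subseteq> \<Union>K"
        using H(4) by (rule subset_trans[rotated])
      then show "\<exists>H e. finite H \<and> (\<forall>h\<in>H. bcont h) \<and> e > 0 \<and>
         {q \<in> Delta a b. \<forall>h\<in>H. \<bar>integral\<^sup>L q h - integral\<^sup>L p h\<bar> < e} \<subseteq> \<Union>K"
        using H(1-3) by blast
    qed
  next
    case (Basis s)
    then obtain h V where s: "s = {p \<in> Delta a b. integral\<^sup>L p h \<in> V}" "bcont h" "open V"
      by (auto simp: bcont_def)
    show ?case
    proof
      fix p assume "p \<in> s"
      then have "integral\<^sup>L p h \<in> V" using s by auto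
      then obtain e where e: "e > 0" "\<forall>y. dist y (integral\<^sup>L p h) < e \<longrightarrow> y \<in> V"
        using s(3) unfolding open_dist by blast
      have sub: "{q \<in> Delta a b. \<forall>h\<in>{h}. \<bar>integral\<^sup>L q h - integral\<^sup>L p h\<bar> < e} \<subseteq> s"
      proof
        fix q assume "q \<in> {q \<in> Delta a b. \<forall>h\<in>{h}. \<bar>integral\<^sup>L q h - integral\<^sup>L p h\<bar> < e}"
        then have q: "q \<in> Delta a b" "dist (integral\<^sup>L q h) (integral\<^sup>L p h) < e"
          by (auto simp: dist_real_def)
        then have "integral\<^sup>L q h \<in> V" using e(2) by blast
        then show "q \<in> s" using q(1) s(1) by blast
      qed
      show "\<exists>H e. finite H \<and> (\<forall>h\<in>H. bcont h) \<and> e > 0 \<and>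
         {q \<in> Delta a b. \<forall>h\<in>H. \<bar>integral\<^sup>L q h - integral\<^sup>L p h\<bar> < e} \<subseteq> s"
        using sub e(1) s(2) by (intro exI[of _ "{h}"] exI[of _ e]) simp
    qed
  qed
  then show ?thesis using assms(2) by blast
qed




definition tg :: "real \<Rightarrow> real \<Rightarrow> nat \<Rightarrow> nat \<Rightarrow> real" where
  "tg a b N i = a + real i * (b - a) / real N"

definition ramp :: "real \<Rightarrow> real \<Rightarrow> real \<Rightarrow> real" where
  "ramp d c x = max 0 (min 1 ((x - c) / d))"

definition fam :: "real \<Rightarrow> real \<Rightarrow> nat \<Rightarrow> real \<Rightarrow> real \<Rightarrow> nat \<Rightarrow> real \<Rightarrow> real" where
  "fam a b N d th j x = (if j = 0 then 1 else if N < j then 0 else ramp d (tg a b N j - th) x)"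

lemma ramp_cont: "continuous_on UNIV (ramp d c)"
proof -
  have "ramp d c = (\<lambda>x. max 0 (min 1 ((x - c) * inverse d)))"
    by (auto simp: ramp_def divide_inverse)
  then show ?thesis by (simp add: continuous_intros)
qed

lemma ramp_01: "0 \<le> ramp d c x" "ramp d c x \<le> 1"
  unfolding ramp_def by auto

lemma ramp_bcont: "bcont (ramp d c)"
  unfolding bcont_def bounded_iff using ramp_cont ramp_01
  by (intro conjI exI[of _ 1]) (auto simp: abs_le_iff ramp_def)

lemma ramp_zero: "d > 0 \<Longrightarrow> x \<le> c \<Longrightarrow> ramp d c x = 0"
  unfolding ramp_def by (auto simp: divide_nonpos_pos)

lemma ramp_one: "d > 0 \<Longrightarrow> c + d \<le> x \<Longrightarrow> ramp d c x = 1"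
  unfolding ramp_def by (auto simp: field_simps)

lemma ramp_anti: assumes "d > 0" "c \<le> c'" shows "ramp d c' x \<le> ramp d c x"
proof -
  have "(x - c')/d \<le> (x - c)/d" using assms by (intro divide_right_mono) auto
  then show ?thesis unfolding ramp_def by (auto simp: max_def min_def)
qed

lemma fam_bcont: "bcont (fam a b N d th j)"
proof -
  have "fam a b N d th j = (if j = 0 then (\<lambda>x. 1) else if N < j then (\<lambda>x. 0) else ramp d (tg a b N j - th))"
    by (auto simp: fam_def)
  then show ?thesis using ramp_bcont by (auto simp: bcont_def)
qed

lemma fam_01: "0 \<le> fam a b N d th j x" "fam a b N d th j x \<le> 1"
  unfolding fam_def using ramp_01 by auto

lemma tg_Suc: "N > 0 \<Longrightarrow> tg a b N (Suc i) = tg a b N i + (b - a) / N"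
  unfolding tg_def by (simp add: field_simps)

lemma tg_mono: "N > 0 \<Longrightarrow> a \<le> b \<Longrightarrow> i \<le> j \<Longrightarrow> tg a b N i \<le> tg a b N j"
  unfolding tg_def by (intro add_left_mono divide_right_mono mult_right_mono) auto

lemma tg_0: "tg a b N 0 = a" by (simp add: tg_def)
lemma tg_N: "N > 0 \<Longrightarrow> tg a b N N = b" by (simp add: tg_def)

lemma tg_in: "N > 0 \<Longrightarrow> a \<le> b \<Longrightarrow> i \<le> N \<Longrightarrow> tg a b N i \<in> {a..b}"
  using tg_mono[of N a b 0 i] tg_mono[of N a b i N] by (auto simp: tg_0 tg_N)

lemma fam_anti: "d > 0 \<Longrightarrow> N > 0 \<Longrightarrow> a \<le> b \<Longrightarrow> fam a b N d th (Suc j) x \<le> fam a b N d th j x"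
  unfolding fam_def using ramp_01 ramp_anti[of d "tg a b N j - th" "tg a b N (Suc j) - th" x]
    tg_mono[of N a b j "Suc j"] by auto

lemma fam_local:
  assumes "d > 0" "N > 0" "a < b" "d \<le> (b - a) / N" "i \<le> N"
    and ne: "fam a b N d th i x \<noteq> fam a b N d th (Suc i) x"
  shows "(0 < i \<longrightarrow> tg a b N i - th < x) \<and> (i < N \<longrightarrow> x < tg a b N i - th + (b - a) / N + d)"
proof (intro conjI impI)
  assume "0 < i"
  show "tg a b N i - th < x"
  proof (rule ccontr)
    assume "\<not> ?thesis"
    then have x: "x \<le> tg a b N i - th" by simp
    have "fam a b N d th i x = 0" using \<open>0 < i\<close> assms x by (simp add: fam_def ramp_zero)
    moreover have "fam a b N d th (Suc i) x = 0"
      using assms x tg_Suc[of N a b i] by (auto simp: fam_def intro!: ramp_zero)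
    ultimately show False using ne by simp
  qed
next
  assume "i < N"
  show "x < tg a b N i - th + (b - a) / N + d"
  proof (rule ccontr)
    assume "\<not> ?thesis"
    then have x: "tg a b N i - th + (b - a) / N + d \<le> x" by simp
    have "fam a b N d th (Suc i) x = 1"
      using assms x \<open>i < N\<close> tg_Suc[of N a b i] by (auto simp: fam_def intro!: ramp_one)
    moreover have "fam a b N d th i x = 1"
      using assms x \<open>i < N\<close> by (auto simp: fam_def intro!: ramp_one)
    ultimately show False using ne by simp
  qed
qed

lemma telesc: "(\<Sum>i\<le>N. (u i - u (Suc i)) :: real) = u 0 - u (Suc N)"
  by (induction N) auto

lemma abel: "(\<Sum>i\<le>N. (u i - u (Suc i)) * (c i :: real)) =
   u 0 * c 0 - u (Suc N) * c N + (\<Sum>i<N. u (Suc i) * (c (Suc i) - c i))"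
  by (induction N) (auto simp: algebra_simps)

lemma abel_mono:
  assumes "u 0 = v 0" "u (Suc N) = v (Suc N)" "\<And>i. i < N \<Longrightarrow> u (Suc i) \<le> v (Suc i)"
    "\<And>i. i < N \<Longrightarrow> c i \<le> (c (Suc i) :: real)"
  shows "(\<Sum>i\<le>N. (u i - u (Suc i)) * c i) \<le> (\<Sum>i\<le>N. (v i - v (Suc i)) * c i)"
  unfolding abel using assms by (auto intro!: sum_mono mult_right_mono)

lemma wsum_ge:
  assumes "(\<Sum>i\<le>N. w i) = (1::real)" "\<And>i. i \<le> N \<Longrightarrow> w i \<ge> 0"
    "\<And>i. i \<le> N \<Longrightarrow> w i \<noteq> 0 \<Longrightarrow> y \<le> c i"
  shows "y \<le> (\<Sum>i\<le>N. w i * c i)"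
proof -
  have "y = (\<Sum>i\<le>N. w i * y)" using assms(1) by (simp add: sum_distrib_right[symmetric])
  also have "\<dots> \<le> (\<Sum>i\<le>N. w i * c i)"
  proof (intro sum_mono)
    fix i assume "i \<in> {..N}"
    then show "w i * y \<le> w i * c i" using assms by (cases "w i = 0") (auto intro: mult_left_mono)
  qed
  finally show ?thesis .
qed

lemma wsum_le:
  assumes "(\<Sum>i\<le>N. w i) = (1::real)" "\<And>i. i \<le> N \<Longrightarrow> w i \<ge> 0"
    "\<And>i. i \<le> N \<Longrightarrow> w i \<noteq> 0 \<Longrightarrow> c i \<le> y"
  shows "(\<Sum>i\<le>N. w i * c i) \<le> y"
proof -
  have "(\<Sum>i\<le>N. w i * c i) \<le> (\<Sum>i\<le>N. w i * y)"
  proof (intro sum_mono)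
    fix i assume "i \<in> {..N}"
    then show "w i * c i \<le> w i * y" using assms by (cases "w i = 0") (auto intro: mult_left_mono)
  qed
  also have "\<dots> = y" using assms(1) by (simp add: sum_distrib_right[symmetric])
  finally show ?thesis .
qed

lemma wsum_approx:
  assumes "(\<Sum>i\<le>N. w i) = (1::real)" "\<And>i. i \<le> N \<Longrightarrow> w i \<ge> 0"
    "\<And>i. i \<le> N \<Longrightarrow> w i \<noteq> 0 \<Longrightarrow> \<bar>c i - y\<bar> \<le> e"
  shows "\<bar>(\<Sum>i\<le>N. w i * c i) - y\<bar> \<le> e"
proof -
  have "(\<Sum>i\<le>N. w i * c i) \<le> y + e"
  proof (rule wsum_le[OF assms(1,2)])
    fix i assume "i \<le> N" "w i \<noteq> 0"
    from assms(3)[OF this] show "c i \<le> y + e" by (simp add: abs_le_iff)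
  qed
  moreover have "y - e \<le> (\<Sum>i\<le>N. w i * c i)"
  proof (rule wsum_ge[OF assms(1,2)])
    fix i assume "i \<le> N" "w i \<noteq> 0"
    from assms(3)[OF this] show "y - e \<le> c i" by (simp add: abs_le_iff)
  qed
  ultimately show ?thesis by (auto simp: abs_le_iff)
qed




definition pl :: "nat \<Rightarrow> (nat \<Rightarrow> real) \<Rightarrow> nat pmf" where
  "pl N w = pmf_of_list (map (\<lambda>i. (i, w i)) [0..<Suc N])"

definition dm :: "real \<Rightarrow> real \<Rightarrow> nat \<Rightarrow> (nat \<Rightarrow> real) \<Rightarrow> real measure" where
  "dm a b N w = distr (measure_pmf (pl N w)) borel (tg a b N)"

lemma sum_upt_lt: "sum_list (map f [0..<n]) = (\<Sum>i<n. (f i :: real))"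
  by (induction n) auto

lemma map_snd_aux: "map snd (map (\<lambda>i. (i, w i)) xs) = map w xs"
  by (induction xs) auto

lemma pl_wf:
  fixes w :: "nat \<Rightarrow> real"
  assumes "\<And>i. i \<le> N \<Longrightarrow> w i \<ge> 0" "(\<Sum>i\<le>N. w i) = 1"
  shows "pmf_of_list_wf (map (\<lambda>i. (i, w i)) [0..<Suc N])"
proof (rule pmf_of_list_wfI)
  show "sum_list (map snd (map (\<lambda>i. (i, w i)) [0..<Suc N])) = 1"
  proof -
    have "sum_list (map snd (map (\<lambda>i. (i, w i)) [0..<Suc N])) = sum_list (map w [0..<Suc N])"
      by (simp only: map_snd_aux)
    also have "\<dots> = (\<Sum>i<Suc N. w i)" by (rule sum_upt_lt)
    also have "\<dots> = 1" using assms(2) by (simp only: lessThan_Suc_atMost)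
    finally show ?thesis .
  qed
qed (use assms(1) in \<open>auto simp: map_snd_aux\<close>)

lemma filter_aux0: "sum_list (map snd (filter (\<lambda>z. fst z = j) (map (\<lambda>i. (i, w i)) [0..<n])))
   = (if j < n then w j else (0::real))"
  by (induction n) (auto simp: less_Suc_eq)

lemma filter_aux: "sum_list (map snd (filter (\<lambda>z. fst z = j) (map (\<lambda>i. (i, w i)) [0..<Suc N])))
   = (if j \<le> N then w j else (0::real))"
  using filter_aux0[of j w "Suc N"] by (simp del: upt_Suc)

lemma pl_pmf:
  assumes "\<And>i. i \<le> N \<Longrightarrow> w i \<ge> 0" "(\<Sum>i\<le>N. w i) = 1"
  shows "pmf (pl N w) j = (if j \<le> N then w j else 0)"
  unfolding pl_def using pl_wf[OF assms] by (simp add: pmf_pmf_of_list filter_aux del: upt_Suc)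

lemma pl_set:
  assumes "\<And>i. i \<le> N \<Longrightarrow> w i \<ge> 0" "(\<Sum>i\<le>N. w i) = 1"
  shows "set_pmf (pl N w) \<subseteq> {..N}"
  using pl_pmf[OF assms] by (auto simp: set_pmf_eq split: if_splits)

lemma dm_int:
  assumes "\<And>i. i \<le> N \<Longrightarrow> w i \<ge> 0" "(\<Sum>i\<le>N. w i) = 1" "h \<in> borel_measurable borel"
  shows "integral\<^sup>L (dm a b N w) h = (\<Sum>i\<le>N. w i * h (tg a b N i))"
proof -
  have "integral\<^sup>L (dm a b N w) h = (\<integral>i. h (tg a b N i) \<partial>measure_pmf (pl N w))"
    unfolding dm_def using assms(3) by (intro integral_distr) auto
  also have "\<dots> = (\<Sum>i\<le>N. h (tg a b N i) * pmf (pl N w) i)"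
    using pl_set[OF assms(1,2)] by (intro integral_measure_pmf_real) auto
  also have "\<dots> = (\<Sum>i\<le>N. w i * h (tg a b N i))"
    using pl_pmf[OF assms(1,2)] by (auto intro!: sum.cong)
  finally show ?thesis .
qed

lemma dm_Delta:
  assumes "\<And>i. i \<le> N \<Longrightarrow> w i \<ge> 0" "(\<Sum>i\<le>N. w i) = 1" "N > 0" "a \<le> b"
  shows "dm a b N w \<in> Delta a b"
proof -
  have ps: "prob_space (dm a b N w)" unfolding dm_def
    by (intro prob_space.prob_space_distr) (auto simp: measure_pmf.prob_space_axioms)
  have "emeasure (dm a b N w) {a..b} = emeasure (measure_pmf (pl N w)) (tg a b N -` {a..b})"
    unfolding dm_def by (subst emeasure_distr) auto
  also have "\<dots> = 1"
    using pl_set[OF assms(1,2)] tg_in[OF assms(3,4)]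
    by (intro measure_pmf.emeasure_eq_1_AE) (auto simp: AE_measure_pmf_iff)
  finally show ?thesis using ps by (simp add: Delta_def dm_def)
qed




lemma bcont_iff: "bcont f \<longleftrightarrow> continuous_on UNIV f \<and> (\<exists>B. \<forall>x. \<bar>f x\<bar> \<le> B)"
  unfolding bcont_def bounded_iff by auto

lemma bcont_diff: assumes "bcont f" "bcont g" shows "bcont (\<lambda>x. f x - g x)"
proof -
  obtain B C where B: "\<forall>x. \<bar>f x\<bar> \<le> B" and C: "\<forall>x. \<bar>g x\<bar> \<le> C"
    using assms unfolding bcont_iff by blast
  have "\<forall>x. \<bar>f x - g x\<bar> \<le> B + C"
  proof
    fix x show "\<bar>f x - g x\<bar> \<le> B + C"
      using abs_triangle_ineq4[of "f x" "g x"] spec[OF B, of x] spec[OF C, of x] by linarith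
  qed
  moreover have "continuous_on UNIV (\<lambda>x. f x - g x)"
    using assms unfolding bcont_iff by (intro continuous_on_diff) auto
  ultimately show ?thesis unfolding bcont_iff by blast
qed

lemma bcont_add: assumes "bcont f" "bcont g" shows "bcont (\<lambda>x. f x + g x)"
proof -
  obtain B C where B: "\<forall>x. \<bar>f x\<bar> \<le> B" and C: "\<forall>x. \<bar>g x\<bar> \<le> C"
    using assms unfolding bcont_iff by blast
  have "\<forall>x. \<bar>f x + g x\<bar> \<le> B + C"
  proof
    fix x show "\<bar>f x + g x\<bar> \<le> B + C"
      using abs_triangle_ineq[of "f x" "g x"] spec[OF B, of x] spec[OF C, of x] by linarith
  qed
  moreover have "continuous_on UNIV (\<lambda>x. f x + g x)"
    using assms unfolding bcont_iff by (intro continuous_on_add) auto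
  ultimately show ?thesis unfolding bcont_iff by blast
qed

lemma bcont_cmult: assumes "bcont f" shows "bcont (\<lambda>x. f x * c)"
proof -
  obtain B where B: "\<forall>x. \<bar>f x\<bar> \<le> B"
    using assms unfolding bcont_iff by blast
  have "\<forall>x. \<bar>f x * c\<bar> \<le> B * \<bar>c\<bar>"
    using B by (simp add: abs_mult mult_right_mono)
  moreover have "continuous_on UNIV (\<lambda>x. f x * c)"
    using assms unfolding bcont_iff by (intro continuous_on_mult_right) auto
  ultimately show ?thesis unfolding bcont_iff by blast
qed

lemma bcont_sum: "finite I \<Longrightarrow> (\<And>i. i \<in> I \<Longrightarrow> bcont (f i)) \<Longrightarrow> bcont (\<lambda>x. \<Sum>i\<in>I. f i x)"
proof (induction I rule: finite_induct)
  case empty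
  then show ?case by (auto simp: bcont_iff)
next
  case (insert i I)
  have "bcont (\<lambda>x. f i x + (\<Sum>i\<in>I. f i x))"
    using insert by (intro bcont_add) auto
  then show ?case using insert by simp
qed

definition gsum :: "(nat \<Rightarrow> real \<Rightarrow> real) \<Rightarrow> nat \<Rightarrow> (nat \<Rightarrow> real) \<Rightarrow> real \<Rightarrow> real" where
  "gsum f N c x = (\<Sum>i\<le>N. (f i x - f (Suc i) x) * c i)"

lemma gsum_bcont: "(\<And>i. bcont (f i)) \<Longrightarrow> bcont (gsum f N c)"
  unfolding gsum_def by (intro bcont_sum bcont_cmult bcont_diff) auto

lemma gsum_int:
  assumes "q \<in> Delta a b" "\<And>i. bcont (f i)"
  shows "integral\<^sup>L q (gsum f N c) = (\<Sum>i\<le>N. (integral\<^sup>L q (f i) - integral\<^sup>L q (f (Suc i))) * c i)"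
proof -
  have int: "\<And>i. integrable q (f i)" using assms by (intro Delta_integrable) auto
  have "integral\<^sup>L q (gsum f N c) = (\<Sum>i\<le>N. integral\<^sup>L q (\<lambda>x. (f i x - f (Suc i) x) * c i))"
    unfolding gsum_def
    by (rule Bochner_Integration.integral_sum[of _ _ "\<lambda>i x. (f i x - f (Suc i) x) * c i"])
       (auto intro!: integrable_diff int)
  also have "\<dots> = (\<Sum>i\<le>N. (integral\<^sup>L q (f i) - integral\<^sup>L q (f (Suc i))) * c i)"
    by (intro sum.cong refl) (simp add: int)
  finally show ?thesis .
qed

lemma evt_div: "(r::real) > 0 \<Longrightarrow> \<forall>\<^sub>F N in sequentially. c / real N < r"
proof -
  assume r: "r > 0"
  obtain n :: nat where n: "c / r < real n" using reals_Archimedean2 by blast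
  show ?thesis unfolding eventually_sequentially
  proof (intro exI[of _ "Suc n"] allI impI)
    fix N assume "Suc n \<le> N"
    then have N: "real n < real N" "real N > 0" by auto
    have "c < r * real n" using n r by (simp add: field_simps)
    also have "\<dots> < r * real N" using N r by simp
    finally show "c / real N < r" using N by (simp add: field_simps)
  qed
qed




lemma fam_0: "fam a b N d th 0 x = 1" by (simp add: fam_def)
lemma fam_big: "N < j \<Longrightarrow> fam a b N d th j x = 0" by (simp add: fam_def)
lemma fam_0f: "fam a b N d th 0 = (\<lambda>x. 1)" by (simp add: fam_def fun_eq_iff)
lemma fam_bigf: "N < j \<Longrightarrow> fam a b N d th j = (\<lambda>x. 0)" by (simp add: fam_def fun_eq_iff)

lemma unif_evt:
  assumes "bcont h" "e > 0"
  shows "\<forall>\<^sub>F N in sequentially. \<forall>x\<in>{a..b}. \<forall>y\<in>{a..b}. \<bar>x - y\<bar> \<le> 2*(b-a)/real N \<longrightarrow> \<bar>h x - h y\<bar> \<le> e"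
proof -
  have "uniformly_continuous_on {a..b} h"
    using assms(1) by (intro compact_uniformly_continuous) (auto simp: bcont_def intro: continuous_on_subset)
  then obtain r where r: "r > 0" "\<forall>x\<in>{a..b}. \<forall>x'\<in>{a..b}. dist x' x < r \<longrightarrow> dist (h x') (h x) < e"
    unfolding uniformly_continuous_on_def using assms(2) by blast
  show ?thesis
    using evt_div[OF r(1), of "2*(b-a)"]
  proof (rule eventually_mono)
    fix N assume N: "2*(b-a)/real N < r"
    show "\<forall>x\<in>{a..b}. \<forall>y\<in>{a..b}. \<bar>x - y\<bar> \<le> 2*(b-a)/real N \<longrightarrow> \<bar>h x - h y\<bar> \<le> e"
    proof (intro ballI impI)
      fix x y assume xy: "x \<in> {a..b}" "y \<in> {a..b}" "\<bar>x - y\<bar> \<le> 2*(b-a)/real N"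
      then have "dist x y < r" using N by (simp add: dist_real_def)
      then have "dist (h x) (h y) < e" using r(2) xy(1,2) by blast
      then show "\<bar>h x - h y\<bar> \<le> e" by (simp add: dist_real_def)
    qed
  qed
qed

lemma approx_gen:
  fixes T :: "nat \<Rightarrow> real"
  assumes ab: "a < b" and N: "N > 0" and dd: "0 < d" "d \<le> (b-a)/N"
    and p: "p \<in> Delta a b"
    and T0: "T 0 = 1" and TN: "T (Suc N) = 0" and Tmono: "\<forall>i\<le>N. T (Suc i) \<le> T i"
    and Tclose: "\<forall>i\<in>{1..N}. \<bar>T i - integral\<^sup>L p (fam a b N d th i)\<bar> \<le> eta"
    and h: "bcont h" "\<forall>x. \<bar>h x\<bar> \<le> Bh"
    and loc: "\<forall>x\<in>{a..b}. \<forall>i\<le>N. fam a b N d th i x \<noteq> fam a b N d th (Suc i) x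
                  \<longrightarrow> \<bar>h (tg a b N i) - h x\<bar> \<le> om"
  shows "\<bar>integral\<^sup>L (dm a b N (\<lambda>i. T i - T (Suc i))) h - integral\<^sup>L p h\<bar>
           \<le> om + 2 * real (Suc N) * eta * Bh"
proof -
  define f where "f = fam a b N d th"
  define S where "S i = integral\<^sup>L p (f i)" for i
  define c where "c i = h (tg a b N i)" for i
  have fb: "bcont (f i)" for i unfolding f_def by (rule fam_bcont)
  have S0: "S 0 = 1" unfolding S_def f_def fam_0f by (rule Delta_int_const[OF p])
  have SN: "S (Suc N) = 0" unfolding S_def f_def fam_bigf[OF lessI] by (rule Delta_int_const[OF p])
  have eta0: "0 \<le> eta"
  proof -
    have "1 \<in> {1..N}" using N by simp
    then have "\<bar>T 1 - integral\<^sup>L p (fam a b N d th 1)\<bar> \<le> eta" using Tclose by blast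
    then show ?thesis by linarith
  qed
  have e_le: "\<bar>T i - S i\<bar> \<le> eta" if "i \<le> Suc N" for i
  proof -
    have "i = 0 \<or> i = Suc N \<or> i \<in> {1..N}" using that by auto
    then show ?thesis
    proof (elim disjE)
      assume "i = 0" then show ?thesis using S0 T0 eta0 by simp
    next
      assume "i = Suc N" then show ?thesis using SN TN eta0 by simp
    next
      assume "i \<in> {1..N}" then show ?thesis using Tclose unfolding S_def f_def by blast
    qed
  qed
  have w0: "\<And>i. i \<le> N \<Longrightarrow> 0 \<le> T i - T (Suc i)" using Tmono by auto
  have w1: "(\<Sum>i\<le>N. T i - T (Suc i)) = 1" using telesc[of T N] T0 TN by simp
  have hm: "h \<in> borel_measurable borel" using h(1) by (simp add: bcont_def borel_measurable_continuous_onI)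
  have I1: "integral\<^sup>L (dm a b N (\<lambda>i. T i - T (Suc i))) h = (\<Sum>i\<le>N. (T i - T (Suc i)) * c i)"
    unfolding c_def by (rule dm_int[OF w0 w1 hm])
  have I2: "integral\<^sup>L p (gsum f N c) = (\<Sum>i\<le>N. (S i - S (Suc i)) * c i)"
    unfolding S_def by (rule gsum_int[OF p fb])
  have pw: "\<bar>gsum f N c x - h x\<bar> \<le> om" if x: "x \<in> {a..b}" for x
    unfolding gsum_def
  proof (rule wsum_approx)
    show "(\<Sum>i\<le>N. f i x - f (Suc i) x) = 1" using telesc[of "\<lambda>i. f i x" N]
      unfolding f_def fam_0 fam_big[OF lessI] by simp
    show "\<And>i. i \<le> N \<Longrightarrow> 0 \<le> f i x - f (Suc i) x"
      unfolding f_def using fam_anti[OF dd(1) N] ab by (simp add: less_imp_le)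
    show "\<And>i. i \<le> N \<Longrightarrow> f i x - f (Suc i) x \<noteq> 0 \<Longrightarrow> \<bar>c i - h x\<bar> \<le> om"
      using loc x unfolding f_def c_def by auto
  qed
  have A: "\<bar>integral\<^sup>L p (gsum f N c) - integral\<^sup>L p h\<bar> \<le> om"
  proof -
    have "integral\<^sup>L p (gsum f N c) - integral\<^sup>L p h = integral\<^sup>L p (\<lambda>x. gsum f N c x - h x)"
      using Delta_integrable[OF p] gsum_bcont[OF fb] h(1) by simp
    also have "\<bar>\<dots>\<bar> \<le> om"
      using pw by (intro Delta_int_abs[OF p] bcont_diff gsum_bcont fb h(1)) auto
    finally show ?thesis .
  qed
  have B: "\<bar>(\<Sum>i\<le>N. (T i - T (Suc i)) * c i) - (\<Sum>i\<le>N. (S i - S (Suc i)) * c i)\<bar>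
      \<le> 2 * real (Suc N) * eta * Bh"
  proof -
    have "\<bar>(\<Sum>i\<le>N. (T i - T (Suc i)) * c i) - (\<Sum>i\<le>N. (S i - S (Suc i)) * c i)\<bar>
        = \<bar>\<Sum>i\<le>N. ((T i - S i) - (T (Suc i) - S (Suc i))) * c i\<bar>"
      by (simp add: sum_subtractf[symmetric] algebra_simps)
    also have "\<dots> \<le> (\<Sum>i\<le>N. \<bar>((T i - S i) - (T (Suc i) - S (Suc i))) * c i\<bar>)"
      by (rule sum_abs)
    also have "\<dots> \<le> (\<Sum>i\<le>N. 2 * eta * Bh)"
    proof (rule sum_mono)
      fix i assume "i \<in> {..N}"
      then have "\<bar>T i - S i\<bar> \<le> eta" "\<bar>T (Suc i) - S (Suc i)\<bar> \<le> eta" by (auto intro: e_le)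
      then have 1: "\<bar>(T i - S i) - (T (Suc i) - S (Suc i))\<bar> \<le> 2 * eta" by linarith
      have 2: "\<bar>c i\<bar> \<le> Bh" using h(2) unfolding c_def by blast
      show "\<bar>((T i - S i) - (T (Suc i) - S (Suc i))) * c i\<bar> \<le> 2 * eta * Bh"
        unfolding abs_mult using 1 2 eta0 by (intro mult_mono) auto
    qed
    also have "\<dots> = 2 * real (Suc N) * eta * Bh" by simp
    finally show ?thesis .
  qed
  show ?thesis using A B I1 I2 by linarith
qed

lemma ceil_bounds:
  assumes "M > (0::nat)"
  shows "S + 1/M \<le> (of_int \<lceil>real M * S\<rceil> + 1) / real M"
    "(of_int \<lceil>real M * S\<rceil> + 1) / real M \<le> S + 2/M"
proof -
  have M: "real M > 0" using assms by simp
  have 1: "real M * S \<le> of_int \<lceil>real M * S\<rceil>" by (rule le_of_int_ceiling)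
  have 2: "of_int \<lceil>real M * S\<rceil> \<le> real M * S + 1" by (rule of_int_ceiling_le_add_one)
  have e1: "(S + 1/M) * M = M * S + 1" using M by (simp add: field_simps)
  have e2: "(S + 2/M) * M = M * S + 2" using M by (simp add: field_simps)
  show "S + 1/M \<le> (of_int \<lceil>real M * S\<rceil> + 1) / real M"
    unfolding pos_le_divide_eq[OF M] e1 using 1 by linarith
  show "(of_int \<lceil>real M * S\<rceil> + 1) / real M \<le> S + 2/M"
    unfolding pos_divide_le_eq[OF M] e2 using 2 by linarith
qed

lemma floor_bounds:
  assumes "M > (0::nat)"
  shows "(of_int \<lfloor>real M * S\<rfloor> - 1) / real M \<le> S - 1/M"
    "S - 2/M \<le> (of_int \<lfloor>real M * S\<rfloor> - 1) / real M"
proof -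
  have M: "real M > 0" using assms by simp
  have 1: "of_int \<lfloor>real M * S\<rfloor> \<le> real M * S" by (rule of_int_floor_le)
  have 2: "real M * S - 1 \<le> of_int \<lfloor>real M * S\<rfloor>" using real_of_int_floor_gt_diff_one[of "real M * S"] by linarith
  have e1: "(S - 1/M) * M = M * S - 1" using M by (simp add: field_simps)
  have e2: "(S - 2/M) * M = M * S - 2" using M by (simp add: field_simps)
  show "(of_int \<lfloor>real M * S\<rfloor> - 1) / real M \<le> S - 1/M"
    unfolding pos_divide_le_eq[OF M] e1 using 1 by linarith
  show "S - 2/M \<le> (of_int \<lfloor>real M * S\<rfloor> - 1) / real M"
    unfolding pos_le_divide_eq[OF M] e2 using 2 by linarith
qed

lemma bcont_const: "bcont (\<lambda>x. c)" by (auto simp: bcont_iff)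

lemma int_fam_01:
  assumes "p \<in> Delta a b"
  shows "0 \<le> integral\<^sup>L p (fam a b N d th i)" "integral\<^sup>L p (fam a b N d th i) \<le> 1"
proof -
  have "integral\<^sup>L p (\<lambda>x. 0) \<le> integral\<^sup>L p (fam a b N d th i)"
    using fam_01 by (intro Delta_int_mono[OF assms] fam_bcont bcont_const) auto
  then show "0 \<le> integral\<^sup>L p (fam a b N d th i)" using Delta_int_const[OF assms, of 0] by simp
  have "integral\<^sup>L p (fam a b N d th i) \<le> integral\<^sup>L p (\<lambda>x. 1)"
    using fam_01 by (intro Delta_int_mono[OF assms] fam_bcont bcont_const) auto
  then show "integral\<^sup>L p (fam a b N d th i) \<le> 1" using Delta_int_const[OF assms, of 1] by simp
qed

lemma int_fam_anti:
  assumes "p \<in> Delta a b" "d > 0" "N > 0" "a \<le> b"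
  shows "integral\<^sup>L p (fam a b N d th (Suc i)) \<le> integral\<^sup>L p (fam a b N d th i)"
  using fam_anti[OF assms(2-4)] by (intro Delta_int_mono[OF assms(1)] fam_bcont) auto

lemma lin1: "t - (D + D/2) < (x::real) \<Longrightarrow> 0 < D \<Longrightarrow> t - 2*D \<le> x" by linarith
lemma lin2: "(x::real) < t - 0 + D + D/2 \<Longrightarrow> 0 < D \<Longrightarrow> x \<le> t + 2*D" by linarith

lemma loc_upper:
  assumes "a < b" "N > 0" "x \<in> {a..b}" "i \<le> N"
    "fam a b N ((b-a)/N/2) ((b-a)/N + (b-a)/N/2) i x \<noteq> fam a b N ((b-a)/N/2) ((b-a)/N + (b-a)/N/2) (Suc i) x"
  shows "tg a b N i - 2*(b-a)/N \<le> x \<and> x \<le> tg a b N i"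
proof -
  have D: "(b-a)/N > 0" using assms by simp
  have D2: "(b-a)/N/2 \<le> (b-a)/N" using D by simp
  have L: "(0 < i \<longrightarrow> tg a b N i - ((b-a)/N + (b-a)/N/2) < x) \<and>
        (i < N \<longrightarrow> x < tg a b N i - ((b-a)/N + (b-a)/N/2) + (b - a) / N + (b-a)/N/2)"
    using D D2 assms by (intro fam_local) auto
  show ?thesis
  proof (cases "i = 0")
    case True
    then have "x < tg a b N 0" using L assms(2) by simp
    then show ?thesis using assms(3) by (simp add: tg_0)
  next
    case False
    then have L1: "tg a b N i - ((b-a)/N + (b-a)/N/2) < x" using L by simp
    have 1: "tg a b N i - 2*(b-a)/N \<le> x"
      unfolding times_divide_eq_right[symmetric] using lin1[OF L1 D] .
    have "x \<le> tg a b N i"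
    proof (cases "i < N")
      case True then show ?thesis using L by simp
    next
      case False then have "i = N" using assms(4) by simp
      then show ?thesis using assms(2,3) by (simp add: tg_N)
    qed
    then show ?thesis using 1 by simp
  qed
qed

lemma loc_lower:
  assumes "a < b" "N > 0" "x \<in> {a..b}" "i \<le> N"
    "fam a b N ((b-a)/N/2) 0 i x \<noteq> fam a b N ((b-a)/N/2) 0 (Suc i) x"
  shows "tg a b N i \<le> x \<and> x \<le> tg a b N i + 2*(b-a)/N"
proof -
  have D: "(b-a)/N > 0" using assms by simp
  have D2: "(b-a)/N/2 \<le> (b-a)/N" using D by simp
  have L: "(0 < i \<longrightarrow> tg a b N i - 0 < x) \<and>
        (i < N \<longrightarrow> x < tg a b N i - 0 + (b - a) / N + (b-a)/N/2)"
    using D D2 assms by (intro fam_local) auto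
  have 1: "tg a b N i \<le> x"
  proof (cases "i = 0")
    case True then show ?thesis using assms(3) by (simp add: tg_0)
  next
    case False then show ?thesis using L by simp
  qed
  have "x \<le> tg a b N i + 2*(b-a)/N"
  proof (cases "i < N")
    case True then have L1: "x < tg a b N i - 0 + (b - a) / N + (b-a)/N/2" using L by simp
    show ?thesis
      unfolding times_divide_eq_right[symmetric] using lin2[OF L1 D] .
  next
    case False then have "i = N" using assms(4) by simp
    then have "tg a b N i = b" using assms(2) by (simp add: tg_N)
    moreover have "0 < i" using \<open>i = N\<close> assms(2) by simp
    ultimately show ?thesis using L assms(3) by simp
  qed
  then show ?thesis using 1 by simp
qed




lemma choose_NM:
  assumes H: "finite H" "\<forall>h\<in>H. bcont h" "e > (0::real)" "a < b"
  obtains N M Bh where "N > 0" "M > 0"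
    "\<forall>h\<in>H. \<forall>x\<in>{a..b}. \<forall>y\<in>{a..b}. \<bar>x - y\<bar> \<le> 2*(b-a)/real N \<longrightarrow> \<bar>h x - h y\<bar> \<le> e/2"
    "\<forall>h\<in>H. \<forall>x. \<bar>h x\<bar> \<le> Bh h"
    "\<forall>h\<in>H. e/2 + 2 * real (Suc N) * (2 / real M) * Bh h < e"
proof -
  have "\<forall>\<^sub>F N in sequentially. 0 < N \<and> (\<forall>h\<in>H. \<forall>x\<in>{a..b}. \<forall>y\<in>{a..b}.
           \<bar>x - y\<bar> \<le> 2*(b-a)/real N \<longrightarrow> \<bar>h x - h y\<bar> \<le> e/2)"
    using H by (intro eventually_conj eventually_gt_at_top eventually_ball_finite ballI unif_evt) auto
  then obtain N where N: "0 < N" "\<forall>h\<in>H. \<forall>x\<in>{a..b}. \<forall>y\<in>{a..b}.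
           \<bar>x - y\<bar> \<le> 2*(b-a)/real N \<longrightarrow> \<bar>h x - h y\<bar> \<le> e/2"
    unfolding eventually_sequentially by blast
  have "\<forall>h\<in>H. \<exists>B. \<forall>x. \<bar>h x\<bar> \<le> B" using H(2) bcont_bound by blast
  then obtain Bh where Bh: "\<forall>h\<in>H. \<forall>x. \<bar>h x\<bar> \<le> Bh h" by metis
  have "\<forall>\<^sub>F M in sequentially. 0 < M \<and> (\<forall>h\<in>H. (4 * real (Suc N) * Bh h) / real M < e/2)"
    using H by (intro eventually_conj eventually_gt_at_top eventually_ball_finite ballI evt_div) auto
  then obtain M where M: "0 < M" "\<forall>h\<in>H. (4 * real (Suc N) * Bh h) / real M < e/2"
    unfolding eventually_sequentially by blast
  have "\<forall>h\<in>H. e/2 + 2 * real (Suc N) * (2 / real M) * Bh h < e"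
  proof
    fix h assume "h \<in> H"
    have "2 * real (Suc N) * (2 / real M) * Bh h = (4 * real (Suc N) * Bh h) / real M" by simp
    then show "e/2 + 2 * real (Suc N) * (2 / real M) * Bh h < e" using M(2) \<open>h \<in> H\<close> by fastforce
  qed
  then show ?thesis using that N M Bh by blast
qed

lemma half_le: "0 < (D::real) \<Longrightarrow> D/2 \<le> D" by linarith

lemma key_upper:
  assumes ab: "a < b" and p: "p \<in> Delta a b" and U: "openin (weak_top a b) U" "p \<in> U"
  shows "\<exists>N w. N > 0 \<and> (\<forall>i\<le>N. 0 \<le> w i \<and> w i \<in> \<rat>) \<and> (\<Sum>i\<le>N. w i) = 1 \<and> dm a b N w \<in> U \<and>
     (\<exists>W. openin (weak_top a b) W \<and> p \<in> W \<and> (\<forall>q\<in>W. fosd (dm a b N w) q))"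
proof -
  obtain H e where H: "finite H" "\<forall>h\<in>H. bcont h" "e > 0"
    and HU: "{q \<in> Delta a b. \<forall>h\<in>H. \<bar>integral\<^sup>L q h - integral\<^sup>L p h\<bar> < e} \<subseteq> U"
    using weak_nbhd[OF U] by blast
  obtain N M Bh where N: "N > 0" and M: "M > 0"
    and Nu: "\<forall>h\<in>H. \<forall>x\<in>{a..b}. \<forall>y\<in>{a..b}. \<bar>x - y\<bar> \<le> 2*(b-a)/real N \<longrightarrow> \<bar>h x - h y\<bar> \<le> e/2"
    and Bh: "\<forall>h\<in>H. \<forall>x. \<bar>h x\<bar> \<le> Bh h"
    and Me: "\<forall>h\<in>H. e/2 + 2 * real (Suc N) * (2 / real M) * Bh h < e"
    using choose_NM[OF H ab] by blast
  define d where "d = (b-a)/N/2"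
  define th where "th = (b-a)/N + (b-a)/N/2"
  define f where "f = fam a b N d th"
  define S where "S i = integral\<^sup>L p (f i)" for i
  define T where "T i = (if i = 0 then 1 else if N < i then 0
      else min 1 ((of_int \<lceil>real M * S i\<rceil> + 1) / real M))" for i
  define w where "w i = T i - T (Suc i)" for i
  have D: "(b-a)/N > 0" using ab N by simp
  have dpos: "0 < d" "d \<le> (b-a)/N" unfolding d_def using half_le[OF D] D by auto
  have fb: "bcont (f i)" for i unfolding f_def by (rule fam_bcont)
  have S01: "0 \<le> S i" "S i \<le> 1" for i unfolding S_def f_def using int_fam_01[OF p] by auto
  have Santi: "S (Suc i) \<le> S i" for i unfolding S_def f_def using int_fam_anti[OF p dpos(1) N] ab by simp
  have Tpos: "0 \<le> T i" for i
  proof -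
    have "0 \<le> (of_int \<lceil>real M * S i\<rceil> + 1) / real M"
      using ceil_bounds(1)[OF M, of "S i"] S01[of i] M by (smt (verit) divide_nonneg_pos of_nat_0_less_iff)
    then show ?thesis unfolding T_def by auto
  qed
  have T0: "T 0 = 1" and TN: "T (Suc N) = 0" unfolding T_def by auto
  have Tmono: "\<forall>i\<le>N. T (Suc i) \<le> T i"
  proof (intro allI impI)
    fix i assume i: "i \<le> N"
    show "T (Suc i) \<le> T i"
    proof (cases "i = 0")
      case True then show ?thesis unfolding T_def by auto
    next
      case False
      show ?thesis
      proof (cases "i < N")
        case True
        have "real M * S (Suc i) \<le> real M * S i" using Santi by (simp add: mult_left_mono)
        then have "\<lceil>real M * S (Suc i)\<rceil> \<le> \<lceil>real M * S i\<rceil>" by (rule ceiling_mono)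
        then have "(of_int \<lceil>real M * S (Suc i)\<rceil> + 1) / real M \<le> (of_int \<lceil>real M * S i\<rceil> + 1) / real M"
          using M by (intro divide_right_mono) auto
        then show ?thesis using True False unfolding T_def by auto
      next
        case False2: False
        then have "N < Suc i" by simp
        then show ?thesis using Tpos[of i] unfolding T_def by simp
      qed
    qed
  qed
  have Tclose: "\<forall>i\<in>{1..N}. \<bar>T i - integral\<^sup>L p (fam a b N d th i)\<bar> \<le> 2 / real M"
  proof
    fix i assume i: "i \<in> {1..N}"
    have 1: "S i \<le> min 1 ((of_int \<lceil>real M * S i\<rceil> + 1) / real M)"
      using ceil_bounds(1)[OF M, of "S i"] S01[of i] M by (smt (verit) divide_pos_pos of_nat_0_less_iff)
    have 2: "min 1 ((of_int \<lceil>real M * S i\<rceil> + 1) / real M) \<le> S i + 2 / real M"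
      using ceil_bounds(2)[OF M, of "S i"] by linarith
    have "T i = min 1 ((of_int \<lceil>real M * S i\<rceil> + 1) / real M)" using i unfolding T_def by auto
    then show "\<bar>T i - integral\<^sup>L p (fam a b N d th i)\<bar> \<le> 2 / real M"
      using 1 2 unfolding S_def f_def by linarith
  qed
  have TQ: "T i \<in> \<rat>" for i
    unfolding T_def by (auto simp: min_def intro!: Rats_divide Rats_add)
  have w0: "\<forall>i\<le>N. 0 \<le> w i \<and> w i \<in> \<rat>" using Tmono TQ unfolding w_def by auto
  have w1: "(\<Sum>i\<le>N. w i) = 1" unfolding w_def using telesc[of T N] T0 TN by simp
  have dD: "dm a b N w \<in> Delta a b" using w0 w1 N ab by (intro dm_Delta) auto
  have dU: "dm a b N w \<in> U"
  proof -
    have "\<bar>integral\<^sup>L (dm a b N w) h - integral\<^sup>L p h\<bar> < e" if hH: "h \<in> H" for h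
    proof -
      have loc: "\<forall>x\<in>{a..b}. \<forall>i\<le>N. fam a b N d th i x \<noteq> fam a b N d th (Suc i) x
                  \<longrightarrow> \<bar>h (tg a b N i) - h x\<bar> \<le> e/2"
      proof (intro ballI allI impI)
        fix x i assume x: "x \<in> {a..b}" and i: "i \<le> N" and ne: "fam a b N d th i x \<noteq> fam a b N d th (Suc i) x"
        have "tg a b N i - 2*(b-a)/N \<le> x \<and> x \<le> tg a b N i"
          using loc_upper[OF ab N x i] ne unfolding d_def th_def by blast
        moreover have "tg a b N i \<in> {a..b}" using tg_in[OF N _ i] ab by simp
        ultimately show "\<bar>h (tg a b N i) - h x\<bar> \<le> e/2" using Nu hH x by auto
      qed
      have "\<bar>integral\<^sup>L (dm a b N (\<lambda>i. T i - T (Suc i))) h - integral\<^sup>L p h\<bar>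
           \<le> e/2 + 2 * real (Suc N) * (2 / real M) * Bh h"
        using H(2) Bh hH by (intro approx_gen[OF ab N dpos p T0 TN Tmono Tclose _ _ loc]) auto
      then show ?thesis using Me hH unfolding w_def by fastforce
    qed
    then show ?thesis using HU dD by blast
  qed
  define W where "W = {q \<in> Delta a b. \<forall>i\<in>{1..N}. integral\<^sup>L q (f i) \<in> {..< S i + 1 / real M}}"
  have Wopen: "openin (weak_top a b) W" unfolding W_def
    by (intro weak_finite_open fb) auto
  have pW: "p \<in> W" unfolding W_def using p M by (auto simp: S_def)
  have dom: "fosd (dm a b N w) q" if qW: "q \<in> W" for q
    unfolding fosd_def
  proof (intro allI impI, elim conjE)
    fix g :: "real \<Rightarrow> real" assume gc: "continuous_on UNIV g" and gb: "bounded (range g)" and gm: "mono g"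
    have gbc: "bcont g" using gc gb by (simp add: bcont_def)
    have q: "q \<in> Delta a b" using qW unfolding W_def by auto
    define F where "F i = integral\<^sup>L q (f i)" for i
    define c where "c i = g (tg a b N i)" for i
    have "integral\<^sup>L q g \<le> integral\<^sup>L q (gsum f N c)"
    proof (rule Delta_int_mono[OF q gbc gsum_bcont[OF fb]])
      fix x assume x: "x \<in> {a..b}"
      show "g x \<le> gsum f N c x" unfolding gsum_def
      proof (rule wsum_ge)
        show "(\<Sum>i\<le>N. f i x - f (Suc i) x) = 1" using telesc[of "\<lambda>i. f i x" N]
          unfolding f_def fam_0 fam_big[OF lessI] by simp
        show "\<And>i. i \<le> N \<Longrightarrow> 0 \<le> f i x - f (Suc i) x"
          unfolding f_def using fam_anti[OF dpos(1) N] ab by (simp add: less_imp_le)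
        fix i assume i: "i \<le> N" and ne: "f i x - f (Suc i) x \<noteq> 0"
        have "x \<le> tg a b N i"
          using loc_upper[OF ab N x i] ne unfolding f_def d_def th_def by auto
        then show "g x \<le> c i" unfolding c_def using gm by (simp add: monoD)
      qed
    qed
    also have "\<dots> = (\<Sum>i\<le>N. (F i - F (Suc i)) * c i)" unfolding F_def by (rule gsum_int[OF q fb])
    also have "\<dots> \<le> (\<Sum>i\<le>N. (T i - T (Suc i)) * c i)"
    proof (rule abel_mono)
      show "F 0 = T 0" unfolding F_def f_def fam_0f T0 by (rule Delta_int_const[OF q])
      show "F (Suc N) = T (Suc N)" unfolding F_def f_def fam_bigf[OF lessI] TN by (rule Delta_int_const[OF q])
      fix i assume i: "i < N"
      show "c i \<le> c (Suc i)" unfolding c_def using gm tg_mono[OF N, of a b i "Suc i"] ab by (simp add: monoD)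
      have Fi: "F (Suc i) < S (Suc i) + 1 / real M" using qW i unfolding W_def F_def by auto
      have F1: "F (Suc i) \<le> 1" unfolding F_def f_def using int_fam_01[OF q] by simp
      have "S (Suc i) + 1 / real M \<le> (of_int \<lceil>real M * S (Suc i)\<rceil> + 1) / real M" by (rule ceil_bounds(1)[OF M])
      moreover have "T (Suc i) = min 1 ((of_int \<lceil>real M * S (Suc i)\<rceil> + 1) / real M)"
        using i unfolding T_def by auto
      ultimately show "F (Suc i) \<le> T (Suc i)" using Fi F1 by linarith
    qed
    also have "\<dots> = integral\<^sup>L (dm a b N w) g"
      unfolding c_def w_def using w0 w1 gbc
      by (intro dm_int[symmetric]) (auto simp: w_def bcont_def borel_measurable_continuous_onI)
    finally show "integral\<^sup>L q g \<le> integral\<^sup>L (dm a b N w) g" .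
  qed
  show ?thesis using N w0 w1 dU Wopen pW dom by blast
qed

lemma key_lower:
  assumes ab: "a < b" and p: "p \<in> Delta a b" and U: "openin (weak_top a b) U" "p \<in> U"
  shows "\<exists>N w. N > 0 \<and> (\<forall>i\<le>N. 0 \<le> w i \<and> w i \<in> \<rat>) \<and> (\<Sum>i\<le>N. w i) = 1 \<and> dm a b N w \<in> U \<and>
     (\<exists>W. openin (weak_top a b) W \<and> p \<in> W \<and> (\<forall>q\<in>W. fosd q (dm a b N w)))"
proof -
  obtain H e where H: "finite H" "\<forall>h\<in>H. bcont h" "e > 0"
    and HU: "{q \<in> Delta a b. \<forall>h\<in>H. \<bar>integral\<^sup>L q h - integral\<^sup>L p h\<bar> < e} \<subseteq> U"
    using weak_nbhd[OF U] by blast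
  obtain N M Bh where N: "N > 0" and M: "M > 0"
    and Nu: "\<forall>h\<in>H. \<forall>x\<in>{a..b}. \<forall>y\<in>{a..b}. \<bar>x - y\<bar> \<le> 2*(b-a)/real N \<longrightarrow> \<bar>h x - h y\<bar> \<le> e/2"
    and Bh: "\<forall>h\<in>H. \<forall>x. \<bar>h x\<bar> \<le> Bh h"
    and Me: "\<forall>h\<in>H. e/2 + 2 * real (Suc N) * (2 / real M) * Bh h < e"
    using choose_NM[OF H ab] by blast
  define d where "d = (b-a)/N/2"
  define th where "th = (0::real)"
  define f where "f = fam a b N d th"
  define S where "S i = integral\<^sup>L p (f i)" for i
  define T where "T i = (if i = 0 then 1 else if N < i then 0
      else max 0 ((of_int \<lfloor>real M * S i\<rfloor> - 1) / real M))" for i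
  define w where "w i = T i - T (Suc i)" for i
  have D: "(b-a)/N > 0" using ab N by simp
  have dpos: "0 < d" "d \<le> (b-a)/N" unfolding d_def using half_le[OF D] D by auto
  have fb: "bcont (f i)" for i unfolding f_def by (rule fam_bcont)
  have S01: "0 \<le> S i" "S i \<le> 1" for i unfolding S_def f_def using int_fam_01[OF p] by auto
  have Santi: "S (Suc i) \<le> S i" for i unfolding S_def f_def using int_fam_anti[OF p dpos(1) N] ab by simp
  have Mpos: "0 < 1 / real M" using M by simp
  have Tpos: "0 \<le> T i" for i unfolding T_def by auto
  have T0: "T 0 = 1" and TN: "T (Suc N) = 0" unfolding T_def by auto
  have Tmono: "\<forall>i\<le>N. T (Suc i) \<le> T i"
  proof (intro allI impI)
    fix i assume i: "i \<le> N"
    show "T (Suc i) \<le> T i"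
    proof (cases "i = 0")
      case True
      have "(of_int \<lfloor>real M * S (Suc i)\<rfloor> - 1) / real M \<le> 1"
        using floor_bounds(1)[OF M, of "S (Suc i)"] S01[of "Suc i"] Mpos by linarith
      then show ?thesis using True unfolding T_def by auto
    next
      case False
      show ?thesis
      proof (cases "i < N")
        case True
        have "real M * S (Suc i) \<le> real M * S i" using Santi by (simp add: mult_left_mono)
        then have "\<lfloor>real M * S (Suc i)\<rfloor> \<le> \<lfloor>real M * S i\<rfloor>" by (rule floor_mono)
        then have "(of_int \<lfloor>real M * S (Suc i)\<rfloor> - 1) / real M \<le> (of_int \<lfloor>real M * S i\<rfloor> - 1) / real M"
          using M by (intro divide_right_mono) auto
        then show ?thesis using True False unfolding T_def by auto
      next
        case False2: False
        then have "N < Suc i" by simp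
        then show ?thesis using Tpos[of i] unfolding T_def by simp
      qed
    qed
  qed
  have Tclose: "\<forall>i\<in>{1..N}. \<bar>T i - integral\<^sup>L p (fam a b N d th i)\<bar> \<le> 2 / real M"
  proof
    fix i assume i: "i \<in> {1..N}"
    have 1: "max 0 ((of_int \<lfloor>real M * S i\<rfloor> - 1) / real M) \<le> S i"
      using floor_bounds(1)[OF M, of "S i"] S01[of i] Mpos by linarith
    have 2: "S i - 2 / real M \<le> max 0 ((of_int \<lfloor>real M * S i\<rfloor> - 1) / real M)"
      using floor_bounds(2)[OF M, of "S i"] by linarith
    have "T i = max 0 ((of_int \<lfloor>real M * S i\<rfloor> - 1) / real M)" using i unfolding T_def by auto
    then show "\<bar>T i - integral\<^sup>L p (fam a b N d th i)\<bar> \<le> 2 / real M"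
      using 1 2 unfolding S_def f_def by linarith
  qed
  have TQ: "T i \<in> \<rat>" for i
    unfolding T_def by (auto simp: max_def intro!: Rats_divide Rats_diff)
  have w0: "\<forall>i\<le>N. 0 \<le> w i \<and> w i \<in> \<rat>" using Tmono TQ unfolding w_def by auto
  have w1: "(\<Sum>i\<le>N. w i) = 1" unfolding w_def using telesc[of T N] T0 TN by simp
  have dD: "dm a b N w \<in> Delta a b" using w0 w1 N ab by (intro dm_Delta) auto
  have dU: "dm a b N w \<in> U"
  proof -
    have "\<bar>integral\<^sup>L (dm a b N w) h - integral\<^sup>L p h\<bar> < e" if hH: "h \<in> H" for h
    proof -
      have loc: "\<forall>x\<in>{a..b}. \<forall>i\<le>N. fam a b N d th i x \<noteq> fam a b N d th (Suc i) x
                  \<longrightarrow> \<bar>h (tg a b N i) - h x\<bar> \<le> e/2"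
      proof (intro ballI allI impI)
        fix x i assume x: "x \<in> {a..b}" and i: "i \<le> N" and ne: "fam a b N d th i x \<noteq> fam a b N d th (Suc i) x"
        have "tg a b N i \<le> x \<and> x \<le> tg a b N i + 2*(b-a)/N"
          using loc_lower[OF ab N x i] ne unfolding d_def th_def by blast
        moreover have "tg a b N i \<in> {a..b}" using tg_in[OF N _ i] ab by simp
        ultimately show "\<bar>h (tg a b N i) - h x\<bar> \<le> e/2" using Nu hH x by auto
      qed
      have "\<bar>integral\<^sup>L (dm a b N (\<lambda>i. T i - T (Suc i))) h - integral\<^sup>L p h\<bar>
           \<le> e/2 + 2 * real (Suc N) * (2 / real M) * Bh h"
        using H(2) Bh hH by (intro approx_gen[OF ab N dpos p T0 TN Tmono Tclose _ _ loc]) auto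
      then show ?thesis using Me hH unfolding w_def by fastforce
    qed
    then show ?thesis using HU dD by blast
  qed
  define W where "W = {q \<in> Delta a b. \<forall>i\<in>{1..N}. integral\<^sup>L q (f i) \<in> {S i - 1 / real M <..}}"
  have Wopen: "openin (weak_top a b) W" unfolding W_def
    by (intro weak_finite_open fb) auto
  have pW: "p \<in> W" unfolding W_def using p M by (auto simp: S_def)
  have dom: "fosd q (dm a b N w)" if qW: "q \<in> W" for q
    unfolding fosd_def
  proof (intro allI impI, elim conjE)
    fix g :: "real \<Rightarrow> real" assume gc: "continuous_on UNIV g" and gb: "bounded (range g)" and gm: "mono g"
    have gbc: "bcont g" using gc gb by (simp add: bcont_def)
    have q: "q \<in> Delta a b" using qW unfolding W_def by auto
    define F where "F i = integral\<^sup>L q (f i)" for i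
    define c where "c i = g (tg a b N i)" for i
    have "integral\<^sup>L (dm a b N w) g = (\<Sum>i\<le>N. (T i - T (Suc i)) * c i)"
      unfolding c_def w_def using w0 w1 gbc
      by (intro dm_int) (auto simp: w_def bcont_def borel_measurable_continuous_onI)
    also have "\<dots> \<le> (\<Sum>i\<le>N. (F i - F (Suc i)) * c i)"
    proof (rule abel_mono)
      show "T 0 = F 0" unfolding F_def f_def fam_0f T0 by (rule Delta_int_const[OF q, symmetric])
      show "T (Suc N) = F (Suc N)" unfolding F_def f_def fam_bigf[OF lessI] TN by (rule Delta_int_const[OF q, symmetric])
      fix i assume i: "i < N"
      show "c i \<le> c (Suc i)" unfolding c_def using gm tg_mono[OF N, of a b i "Suc i"] ab by (simp add: monoD)
      have Fi: "S (Suc i) - 1 / real M < F (Suc i)" using qW i unfolding W_def F_def by auto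
      have F0: "0 \<le> F (Suc i)" unfolding F_def f_def using int_fam_01[OF q] by simp
      have "(of_int \<lfloor>real M * S (Suc i)\<rfloor> - 1) / real M \<le> S (Suc i) - 1 / real M" by (rule floor_bounds(1)[OF M])
      moreover have "T (Suc i) = max 0 ((of_int \<lfloor>real M * S (Suc i)\<rfloor> - 1) / real M)"
        using i unfolding T_def by auto
      ultimately show "T (Suc i) \<le> F (Suc i)" using Fi F0 by linarith
    qed
    also have "\<dots> = integral\<^sup>L q (gsum f N c)" unfolding F_def by (rule gsum_int[OF q fb, symmetric])
    also have "\<dots> \<le> integral\<^sup>L q g"
    proof (rule Delta_int_mono[OF q gsum_bcont[OF fb] gbc])
      fix x assume x: "x \<in> {a..b}"
      show "gsum f N c x \<le> g x" unfolding gsum_def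
      proof (rule wsum_le)
        show "(\<Sum>i\<le>N. f i x - f (Suc i) x) = 1" using telesc[of "\<lambda>i. f i x" N]
          unfolding f_def fam_0 fam_big[OF lessI] by simp
        show "\<And>i. i \<le> N \<Longrightarrow> 0 \<le> f i x - f (Suc i) x"
          unfolding f_def using fam_anti[OF dpos(1) N] ab by (simp add: less_imp_le)
        fix i assume i: "i \<le> N" and ne: "f i x - f (Suc i) x \<noteq> 0"
        have "tg a b N i \<le> x"
          using loc_lower[OF ab N x i] ne unfolding f_def d_def th_def by auto
        then show "c i \<le> g x" unfolding c_def using gm by (simp add: monoD)
      qed
    qed
    finally show "integral\<^sup>L (dm a b N w) g \<le> integral\<^sup>L q g" .
  qed
  show ?thesis using N w0 w1 dU Wopen pW dom by blast
qed




definition mkD :: "real \<Rightarrow> real \<Rightarrow> nat \<times> rat list \<Rightarrow> real measure" where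
  "mkD a b nw = (case nw of (N, ws) \<Rightarrow>
     if 0 < N \<and> length ws = Suc N \<and> (\<forall>r\<in>set ws. 0 \<le> r) \<and> sum_list ws = 1
     then dm a b N (\<lambda>i. of_rat (ws ! i)) else return borel a)"

lemma return_Delta: "a \<le> b \<Longrightarrow> return borel a \<in> Delta a b"
  unfolding Delta_def by (auto intro!: prob_space_return)

lemma mkD_Delta:
  assumes "a < b" shows "mkD a b nw \<in> Delta a b"
proof (cases nw)
  case (Pair N ws)
  show ?thesis
  proof (cases "0 < N \<and> length ws = Suc N \<and> (\<forall>r\<in>set ws. 0 \<le> r) \<and> sum_list ws = 1")
    case True
    have w0: "\<And>i. i \<le> N \<Longrightarrow> 0 \<le> (of_rat (ws ! i) :: real)"
      using True by (auto simp: nth_mem)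
    have "(\<Sum>i\<le>N. (of_rat (ws ! i) :: real)) = of_rat (\<Sum>i<Suc N. ws ! i)"
      by (simp add: of_rat_sum lessThan_Suc_atMost)
    also have "(\<Sum>i<Suc N. ws ! i) = sum_list ws"
      using True by (simp add: sum_list_sum_nth atLeast0LessThan)
    finally have w1: "(\<Sum>i\<le>N. (of_rat (ws ! i) :: real)) = 1" using True by simp
    show ?thesis unfolding mkD_def Pair case_prod_conv if_P[OF True]
      using True dm_Delta[OF w0 w1] assms by simp
  next
    case False
    show ?thesis unfolding mkD_def Pair case_prod_conv if_not_P[OF False]
      using return_Delta assms by simp
  qed
qed

lemma dm_cong: "(\<And>i. i \<le> N \<Longrightarrow> w i = w' i) \<Longrightarrow> dm a b N w = dm a b N w'"
proof -
  assume eq: "\<And>i. i \<le> N \<Longrightarrow> w i = w' i"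
  have "map (\<lambda>i. (i, w i)) [0..<Suc N] = map (\<lambda>i. (i, w' i)) [0..<Suc N]"
    using eq by (intro map_cong) auto
  then show ?thesis unfolding dm_def pl_def
    by (rule arg_cong[where f="\<lambda>xs. distr (measure_pmf (pmf_of_list xs)) borel (tg a b N)"])
qed

lemma mkD_of:
  assumes "N > 0" "\<forall>i\<le>N. 0 \<le> w i \<and> w i \<in> \<rat>" "(\<Sum>i\<le>N. w i) = 1"
  shows "\<exists>nw. mkD a b nw = dm a b N w"
proof -
  have "\<forall>i. \<exists>r. i \<le> N \<longrightarrow> w i = of_rat r"
    using assms(2) by (metis Rats_cases)
  then obtain r where r: "\<And>i. i \<le> N \<Longrightarrow> w i = of_rat (r i)" by metis
  define ws where "ws = map r [0..<Suc N]"
  have len: "length ws = Suc N" unfolding ws_def by simp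
  have nth: "\<And>i. i \<le> N \<Longrightarrow> ws ! i = r i" unfolding ws_def
    by (metis add_0 diff_zero le_imp_less_Suc length_upt nth_map nth_upt)
  have nn: "\<forall>x\<in>set ws. 0 \<le> x"
  proof
    fix x assume "x \<in> set ws"
    then obtain i where "i < Suc N" "x = r i" unfolding ws_def by (auto simp del: upt_Suc)
    then show "0 \<le> x" using assms(2) r[of i] by (metis less_Suc_eq_le zero_le_of_rat_iff)
  qed
  have "of_rat (sum_list ws) = (\<Sum>i\<le>N. w i)"
  proof -
    have "sum_list ws = (\<Sum>i<Suc N. ws ! i)"
      using len by (simp add: sum_list_sum_nth atLeast0LessThan)
    also have "\<dots> = (\<Sum>i\<le>N. r i)" using nth by (simp add: lessThan_Suc_atMost)
    finally show ?thesis using r by (simp add: of_rat_sum)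
  qed
  then have s1: "sum_list ws = 1" using assms(3) by simp
  have "mkD a b (N, ws) = dm a b N (\<lambda>i. of_rat (ws ! i))"
    using assms(1) len nn s1 by (simp add: mkD_def)
  also have "\<dots> = dm a b N w" using nth r by (intro dm_cong) auto
  finally show ?thesis by blast
qed

lemma topspace_act: "topspace (act_top a b) = {f. \<forall>s. f s \<in> Delta a b}"
  unfolding act_top_def by (auto simp: topspace_weak PiE_UNIV_domain)

lemma act_key:
  fixes f :: "'s::finite \<Rightarrow> real measure"
  assumes ab: "a < b" and f: "f \<in> topspace (act_top a b)" and U: "openin (act_top a b) U" "f \<in> U"
  shows "\<exists>g. (\<lambda>s. mkD a b (g s)) \<in> U \<and>
          (\<exists>W. openin (act_top a b) W \<and> f \<in> W \<and> (\<forall>z\<in>W. act_ge (\<lambda>s. mkD a b (g s)) z))"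
    "\<exists>g. (\<lambda>s. mkD a b (g s)) \<in> U \<and>
          (\<exists>W. openin (act_top a b) W \<and> f \<in> W \<and> (\<forall>z\<in>W. act_ge z (\<lambda>s. mkD a b (g s))))"
proof -
  obtain V where V: "f \<in> (\<Pi>\<^sub>E s\<in>UNIV. V s)" "\<forall>s. openin (weak_top a b) (V s)"
    "(\<Pi>\<^sub>E s\<in>UNIV. V s) \<subseteq> U"
    using product_topology_open_contains_basis[OF U[unfolded act_top_def]] by blast
  have fs: "f s \<in> Delta a b" "f s \<in> V s" for s using f V(1) by (auto simp: topspace_act)
  have "\<forall>s. \<exists>nW. mkD a b (fst nW) \<in> V s \<and> openin (weak_top a b) (snd nW) \<and> f s \<in> snd nW \<and>
            (\<forall>q\<in>snd nW. fosd (mkD a b (fst nW)) q)"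
  proof
    fix s
    obtain N w W where "N > 0" "\<forall>i\<le>N. 0 \<le> w i \<and> w i \<in> \<rat>" "(\<Sum>i\<le>N. w i) = 1" "dm a b N w \<in> V s"
      "openin (weak_top a b) W" "f s \<in> W" "\<forall>q\<in>W. fosd (dm a b N w) q"
      using key_upper[OF ab fs(1) V(2)[rule_format] fs(2)] by blast
    moreover obtain nw where "mkD a b nw = dm a b N w" using mkD_of calculation(1-3) by blast
    ultimately show "\<exists>nW. mkD a b (fst nW) \<in> V s \<and> openin (weak_top a b) (snd nW) \<and> f s \<in> snd nW \<and>
            (\<forall>q\<in>snd nW. fosd (mkD a b (fst nW)) q)"
      by (intro exI[of _ "(nw, W)"]) auto
  qed
  then obtain G where G: "\<And>s. mkD a b (fst (G s)) \<in> V s" "\<And>s. openin (weak_top a b) (snd (G s))"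
    "\<And>s. f s \<in> snd (G s)" "\<And>s. \<forall>q\<in>snd (G s). fosd (mkD a b (fst (G s))) q"
    by metis
  have "(\<lambda>s. mkD a b (fst (G s))) \<in> U" using V(3) G(1) by auto
  moreover have "openin (act_top a b) (\<Pi>\<^sub>E s\<in>UNIV. snd (G s))"
    unfolding act_top_def using G(2) by (intro product_topology_basis) auto
  moreover have "f \<in> (\<Pi>\<^sub>E s\<in>UNIV. snd (G s))" using G(3) by auto
  moreover have "\<forall>z\<in>(\<Pi>\<^sub>E s\<in>UNIV. snd (G s)). act_ge (\<lambda>s. mkD a b (fst (G s))) z"
    using G(4) by (auto simp: act_ge_def)
  ultimately show "\<exists>g. (\<lambda>s. mkD a b (g s)) \<in> U \<and>
          (\<exists>W. openin (act_top a b) W \<and> f \<in> W \<and> (\<forall>z\<in>W. act_ge (\<lambda>s. mkD a b (g s)) z))"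
    by (intro exI[of _ "\<lambda>s. fst (G s)"] conjI exI[of _ "\<Pi>\<^sub>E s\<in>UNIV. snd (G s)"]) auto
next
  obtain V where V: "f \<in> (\<Pi>\<^sub>E s\<in>UNIV. V s)" "\<forall>s. openin (weak_top a b) (V s)"
    "(\<Pi>\<^sub>E s\<in>UNIV. V s) \<subseteq> U"
    using product_topology_open_contains_basis[OF U[unfolded act_top_def]] by blast
  have fs: "f s \<in> Delta a b" "f s \<in> V s" for s using f V(1) by (auto simp: topspace_act)
  have "\<forall>s. \<exists>nW. mkD a b (fst nW) \<in> V s \<and> openin (weak_top a b) (snd nW) \<and> f s \<in> snd nW \<and>
            (\<forall>q\<in>snd nW. fosd q (mkD a b (fst nW)))"
  proof
    fix s
    obtain N w W where "N > 0" "\<forall>i\<le>N. 0 \<le> w i \<and> w i \<in> \<rat>" "(\<Sum>i\<le>N. w i) = 1" "dm a b N w \<in> V s"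
      "openin (weak_top a b) W" "f s \<in> W" "\<forall>q\<in>W. fosd q (dm a b N w)"
      using key_lower[OF ab fs(1) V(2)[rule_format] fs(2)] by blast
    moreover obtain nw where "mkD a b nw = dm a b N w" using mkD_of calculation(1-3) by blast
    ultimately show "\<exists>nW. mkD a b (fst nW) \<in> V s \<and> openin (weak_top a b) (snd nW) \<and> f s \<in> snd nW \<and>
            (\<forall>q\<in>snd nW. fosd q (mkD a b (fst nW)))"
      by (intro exI[of _ "(nw, W)"]) auto
  qed
  then obtain G where G: "\<And>s. mkD a b (fst (G s)) \<in> V s" "\<And>s. openin (weak_top a b) (snd (G s))"
    "\<And>s. f s \<in> snd (G s)" "\<And>s. \<forall>q\<in>snd (G s). fosd q (mkD a b (fst (G s)))"
    by metis
  have "(\<lambda>s. mkD a b (fst (G s))) \<in> U" using V(3) G(1) by auto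
  moreover have "openin (act_top a b) (\<Pi>\<^sub>E s\<in>UNIV. snd (G s))"
    unfolding act_top_def using G(2) by (intro product_topology_basis) auto
  moreover have "f \<in> (\<Pi>\<^sub>E s\<in>UNIV. snd (G s))" using G(3) by auto
  moreover have "\<forall>z\<in>(\<Pi>\<^sub>E s\<in>UNIV. snd (G s)). act_ge z (\<lambda>s. mkD a b (fst (G s)))"
    using G(4) by (auto simp: act_ge_def)
  ultimately show "\<exists>g. (\<lambda>s. mkD a b (g s)) \<in> U \<and>
          (\<exists>W. openin (act_top a b) W \<and> f \<in> W \<and> (\<forall>z\<in>W. act_ge z (\<lambda>s. mkD a b (g s))))"
    by (intro exI[of _ "\<lambda>s. fst (G s)"] conjI exI[of _ "\<Pi>\<^sub>E s\<in>UNIV. snd (G s)"]) auto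
qed




definition XX :: "real \<Rightarrow> real \<Rightarrow> ('s \<Rightarrow> nat \<times> rat list) \<Rightarrow> ('s \<Rightarrow> real measure)" where
  "XX a b g = (\<lambda>s. mkD a b (g s))"

definition BB :: "real \<Rightarrow> real \<Rightarrow> nat \<Rightarrow> ('s::finite \<Rightarrow> real measure) set" where
  "BB a b i = (case i of 0 \<Rightarrow> {} | Suc j \<Rightarrow> (case from_nat j of (g1, g2) \<Rightarrow> {XX a b g1, XX a b g2}))"

lemma XX_top: "a < b \<Longrightarrow> XX a b g \<in> topspace (act_top a b)"
  by (simp add: topspace_act XX_def mkD_Delta)

lemma BB_pair: "BB a b (Suc (to_nat (g1, g2))) = {XX a b g1, XX a b g2}"
  by (simp add: BB_def)

lemma BB_Suc: "\<exists>g1 g2. BB a b (Suc j) = {XX a b g1, XX a b g2}"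
  by (simp add: BB_def split: prod.splits) blast

lemma UB: "(\<Union>i\<in>{1..}. BB a b i) = range (XX a b :: ('s::finite \<Rightarrow> nat \<times> rat list) \<Rightarrow> _)"
proof
  show "(\<Union>i\<in>{1..}. BB a b i) \<subseteq> range (XX a b :: ('s \<Rightarrow> nat \<times> rat list) \<Rightarrow> _)"
  proof
    fix x assume "x \<in> (\<Union>i\<in>{1..}. BB a b i :: ('s \<Rightarrow> real measure) set)"
    then obtain i where i: "i \<ge> 1" "x \<in> BB a b i" by auto
    then obtain j where "i = Suc j" by (cases i) auto
    then show "x \<in> range (XX a b :: ('s \<Rightarrow> nat \<times> rat list) \<Rightarrow> _)" using i BB_Suc[of a b j] by auto
  qed
  show "range (XX a b :: ('s \<Rightarrow> nat \<times> rat list) \<Rightarrow> _) \<subseteq> (\<Union>i\<in>{1..}. BB a b i)"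
  proof
    fix x assume "x \<in> range (XX a b :: ('s::finite \<Rightarrow> nat \<times> rat list) \<Rightarrow> _)"
    then obtain g where "x = XX a b g" by auto
    then have "x \<in> BB a b (Suc (to_nat (g, g)))" by (simp add: BB_pair)
    then show "x \<in> (\<Union>i\<in>{1..}. BB a b i)" by force
  qed
qed

lemma pref_refl: "preference T R \<Longrightarrow> x \<in> topspace T \<Longrightarrow> (x, x) \<in> R"
  unfolding preference_def by blast

lemma pref_top: "preference T R \<Longrightarrow> (x, y) \<in> R \<Longrightarrow> x \<in> topspace T \<and> y \<in> topspace T"
  unfolding preference_def by blast

lemma pref_trans: "preference T R \<Longrightarrow> (x, y) \<in> R \<Longrightarrow> (y, z) \<in> R \<Longrightarrow> (x, z) \<in> R"
  unfolding preference_def trans_def by blast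

lemma choice_pair: "(x, x) \<in> R \<Longrightarrow> x \<in> choice R {x, y} \<longleftrightarrow> (x, y) \<in> R"
  unfolding choice_def by auto

lemma conv_lemma:
  fixes R :: "nat \<Rightarrow> (('s::finite \<Rightarrow> real measure) \<times> ('s \<Rightarrow> real measure)) set"
  assumes ab: "a < b"
    and Rs: "preference (act_top a b) Rstar" "weakly_monotone a b Rstar"
    and Rk: "\<forall>k\<ge>1. preference (act_top a b) (R k) \<and> weakly_monotone a b (R k)
               \<and> (\<forall>i\<in>{1..k}. choice (R k) (BB a b i) = choice Rstar (BB a b i))"
  shows "closed_conv (prod_topology (act_top a b) (act_top a b)) R Rstar"
proof -
  define T :: "('s \<Rightarrow> real measure) topology" where "T = act_top a b"
  define P where "P = prod_topology T T"
  have topP: "topspace P = topspace T \<times> topspace T" unfolding P_def by simp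
  have agree: "(XX a b g1, XX a b g2) \<in> R n \<longleftrightarrow> (XX a b g1, XX a b g2) \<in> Rstar"
    if n: "n \<ge> Suc (to_nat (g1, g2))" for g1 g2 n
  proof -
    let ?k = "Suc (to_nat (g1, g2))"
    have n1: "n \<ge> 1" using n by simp
    have Rn: "preference (act_top a b) (R n) \<and> weakly_monotone a b (R n)
               \<and> (\<forall>i\<in>{1..n}. choice (R n) (BB a b i) = choice Rstar (BB a b i))"
      using Rk n1 by blast
    have kin: "?k \<in> {1..n}" using n by simp
    have ch: "choice (R n) (BB a b ?k) = choice Rstar (BB a b ?k)" using Rn kin by blast
    have x: "XX a b g1 \<in> topspace T" unfolding T_def by (rule XX_top[OF ab])
    have r1: "(XX a b g1, XX a b g1) \<in> R n" using pref_refl[OF conjunct1[OF Rn] x[unfolded T_def]] .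
    have r2: "(XX a b g1, XX a b g1) \<in> Rstar" using pref_refl[OF Rs(1) x[unfolded T_def]] .
    show ?thesis using ch unfolding BB_pair using choice_pair[OF r1] choice_pair[OF r2] by metis
  qed
  have mono_n: "(u, v) \<in> R n" if "n \<ge> 1" "u \<in> topspace T" "v \<in> topspace T" "act_ge u v" for u v n
  proof -
    have "weakly_monotone a b (R n)" using Rk that(1) by blast
    then show ?thesis using that(2-4) unfolding weakly_monotone_def T_def by blast
  qed
  have mono_s: "(u, v) \<in> Rstar" if "u \<in> topspace T" "v \<in> topspace T" "act_ge u v" for u v
    using Rs(2) that unfolding weakly_monotone_def T_def by blast
  have key1: "\<exists>g. XX a b g \<in> U \<and> (\<exists>W. openin T W \<and> x \<in> W \<and> (\<forall>z\<in>W. act_ge (XX a b g) z))"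
    if "x \<in> topspace T" "openin T U" "x \<in> U" for x U
    using act_key(1)[OF ab, of x U] that unfolding T_def XX_def by blast
  have key2: "\<exists>g. XX a b g \<in> U \<and> (\<exists>W. openin T W \<and> x \<in> W \<and> (\<forall>z\<in>W. act_ge z (XX a b g)))"
    if "x \<in> topspace T" "openin T U" "x \<in> U" for x U
    using act_key(2)[OF ab, of x U] that unfolding T_def XX_def by blast
  have XT: "XX a b g \<in> topspace T" for g unfolding T_def by (rule XX_top[OF ab])
  have S1: "Rstar \<subseteq> Li P R"
  proof
    fix z assume zR: "z \<in> Rstar"
    obtain x y where z: "z = (x, y)" by (cases z)
    have xy: "x \<in> topspace T" "y \<in> topspace T" using pref_top[OF Rs(1)] zR z unfolding T_def by auto
    show "z \<in> Li P R" unfolding Li_def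
    proof (intro CollectI conjI allI impI)
      show "z \<in> topspace P" using xy z topP by simp
      fix Ob assume Ob: "openin P Ob \<and> z \<in> Ob"
      then obtain U1 U2 where U: "openin T U1" "openin T U2" "x \<in> U1" "y \<in> U2" "U1 \<times> U2 \<subseteq> Ob"
        using z unfolding P_def openin_prod_topology_alt by blast
      obtain g1 W1 where g1: "XX a b g1 \<in> U1" "openin T W1" "x \<in> W1" "\<forall>z\<in>W1. act_ge (XX a b g1) z"
        using key1[OF xy(1) U(1,3)] by blast
      obtain g2 W2 where g2: "XX a b g2 \<in> U2" "openin T W2" "y \<in> W2" "\<forall>z\<in>W2. act_ge z (XX a b g2)"
        using key2[OF xy(2) U(2,4)] by blast
      have "(XX a b g1, x) \<in> Rstar" using mono_s[OF XT xy(1)] g1 by blast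
      moreover have "(y, XX a b g2) \<in> Rstar" using mono_s[OF xy(2) XT] g2 by blast
      ultimately have st: "(XX a b g1, XX a b g2) \<in> Rstar"
        using zR z pref_trans[OF Rs(1)] by blast
      show "\<forall>\<^sub>F n in sequentially. R n \<inter> Ob \<noteq> {}"
        unfolding eventually_sequentially
      proof (intro exI[of _ "Suc (to_nat (g1, g2))"] allI impI)
        fix n assume "Suc (to_nat (g1, g2)) \<le> n"
        then have "(XX a b g1, XX a b g2) \<in> R n" using agree st by blast
        moreover have "(XX a b g1, XX a b g2) \<in> Ob" using U(5) g1(1) g2(1) by blast
        ultimately show "R n \<inter> Ob \<noteq> {}" by blast
      qed
    qed
  qed
  have S2: "Li P R \<subseteq> Ls P R"
    unfolding Li_def Ls_def by (auto intro: eventually_frequently)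
  have S3: "Ls P R \<subseteq> Rstar"
  proof
    fix z assume zL: "z \<in> Ls P R"
    obtain x y where z: "z = (x, y)" by (cases z)
    have xy: "x \<in> topspace T" "y \<in> topspace T" using zL z topP unfolding Ls_def by auto
    show "z \<in> Rstar"
    proof (rule ccontr)
      assume zn: "z \<notin> Rstar"
      have "closedin P Rstar" using Rs(1) unfolding preference_def P_def T_def by blast
      then have opn: "openin (prod_topology T T) (topspace P - Rstar)" by (simp add: closedin_def P_def)
      have zin: "(x, y) \<in> topspace P - Rstar" using zn xy z topP by simp
      have "\<exists>U V. openin T U \<and> openin T V \<and> x \<in> U \<and> y \<in> V \<and> U \<times> V \<subseteq> topspace P - Rstar"
        using opn[unfolded openin_prod_topology_alt, rule_format, OF zin] .
      then obtain U1 U2 where U: "openin T U1" "openin T U2" "x \<in> U1" "y \<in> U2"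
        "U1 \<times> U2 \<subseteq> topspace P - Rstar" by blast
      obtain g1 W1 where g1: "XX a b g1 \<in> U1" "openin T W1" "x \<in> W1" "\<forall>z\<in>W1. act_ge (XX a b g1) z"
        using key1[OF xy(1) U(1,3)] by blast
      obtain g2 W2 where g2: "XX a b g2 \<in> U2" "openin T W2" "y \<in> W2" "\<forall>z\<in>W2. act_ge z (XX a b g2)"
        using key2[OF xy(2) U(2,4)] by blast
      have nst: "(XX a b g1, XX a b g2) \<notin> Rstar" using U(5) g1(1) g2(1) by blast
      have "openin P (W1 \<times> W2)" unfolding P_def using g1(2) g2(2) by (simp add: openin_prod_Times_iff)
      moreover have "z \<in> W1 \<times> W2" using z g1(3) g2(3) by simp
      ultimately have "\<exists>\<^sub>F n in sequentially. R n \<inter> (W1 \<times> W2) \<noteq> {}" using zL unfolding Ls_def by blast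
      then obtain n where n: "n \<ge> Suc (to_nat (g1, g2))" "R n \<inter> (W1 \<times> W2) \<noteq> {}"
        unfolding frequently_sequentially by blast
      then obtain u v where uv: "(u, v) \<in> R n" "u \<in> W1" "v \<in> W2" by blast
      have n1: "n \<ge> 1" using n by simp
      have uvT: "u \<in> topspace T" "v \<in> topspace T" using uv g1(2) g2(2) openin_subset by blast+
      have "(XX a b g1, u) \<in> R n" using mono_n[OF n1 XT uvT(1)] g1(4) uv(2) by blast
      moreover have "(v, XX a b g2) \<in> R n" using mono_n[OF n1 uvT(2) XT] g2(4) uv(3) by blast
      moreover have "preference (act_top a b) (R n)"
      proof -
        have "preference (act_top a b) (R n) \<and> weakly_monotone a b (R n)" using Rk n1 by blast
        then show ?thesis by blast
      qed
      ultimately have "(XX a b g1, XX a b g2) \<in> R n" using uv(1) pref_trans by metis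
      then show False using agree[OF n(1)] nst by blast
    qed
  qed
  show ?thesis unfolding closed_conv_def P_def[symmetric] T_def[symmetric]
    using S1 S2 S3 by blast
qed

theorem mainTheorem7:
  fixes a b :: real
  assumes "a < b"
  shows "\<exists>B :: nat \<Rightarrow> ('s::finite \<Rightarrow> real measure) set.
    (\<forall>i\<ge>1. \<exists>x y. x \<in> topspace (act_top a b) \<and> y \<in> topspace (act_top a b) \<and> B i = {x, y})
    \<and> (act_top a b) closure_of (\<Union>i\<in>{1..}. B i) = topspace (act_top a b)
    \<and> (\<forall>x\<in>(\<Union>i\<in>{1..}. B i). \<forall>y\<in>(\<Union>i\<in>{1..}. B i). \<exists>k\<ge>1. B k = {x, y})
    \<and> (\<forall>Rstar R.
         preference (act_top a b) Rstar \<and> weakly_monotone a b Rstar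
         \<and> (\<forall>k\<ge>1. preference (act_top a b) (R k) \<and> weakly_monotone a b (R k)
               \<and> (\<forall>i\<in>{1..k}. choice (R k) (B i) = choice Rstar (B i)))
         \<longrightarrow> closed_conv (prod_topology (act_top a b) (act_top a b)) R Rstar)"
proof (intro exI[of _ "BB a b"] conjI allI impI ballI)
  show "\<exists>x y. x \<in> topspace (act_top a b) \<and> y \<in> topspace (act_top a b) \<and> BB a b i = {x, y :: 's \<Rightarrow> real measure}"
    if i1: "i \<ge> 1" for i :: nat
  proof -
    obtain j where j: "i = Suc j" using i1 Suc_le_D[of 0 i] by auto
    obtain g1 g2 :: "'s \<Rightarrow> nat \<times> rat list" where g: "BB a b (Suc j) = {XX a b g1, XX a b g2}"
      using BB_Suc[of a b j] by blast
    show ?thesis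
      by (rule exI[where x="XX a b g1"], rule exI[where x="XX a b g2"]) (simp add: j g XX_top[OF assms])
  qed
  show "act_top a b closure_of (\<Union>i\<in>{1..}. BB a b i) = topspace (act_top a b :: ('s \<Rightarrow> real measure) topology)"
  proof
    show "act_top a b closure_of (\<Union>i\<in>{1..}. BB a b i) \<subseteq> topspace (act_top a b :: ('s \<Rightarrow> real measure) topology)"
      by (rule closure_of_subset_topspace)
    show "topspace (act_top a b :: ('s \<Rightarrow> real measure) topology) \<subseteq> act_top a b closure_of (\<Union>i\<in>{1..}. BB a b i)"
    proof
      fix x :: "'s \<Rightarrow> real measure" assume x: "x \<in> topspace (act_top a b)"
      show "x \<in> act_top a b closure_of (\<Union>i\<in>{1..}. BB a b i)"
        unfolding in_closure_of UB
      proof (intro conjI allI impI x)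
        fix T assume T: "x \<in> T \<and> openin (act_top a b) T"
        obtain g where "(\<lambda>s. mkD a b (g s)) \<in> T"
          using act_key(1)[OF assms x, of T] T by blast
        then show "\<exists>y. y \<in> range (XX a b :: ('s \<Rightarrow> nat \<times> rat list) \<Rightarrow> _) \<and> y \<in> T" unfolding XX_def by blast
      qed
    qed
  qed
  show "\<exists>k\<ge>1. BB a b k = {x, y}"
    if xyB: "x \<in> (\<Union>i\<in>{1..}. BB a b i)" "y \<in> (\<Union>i\<in>{1..}. BB a b i)" for x y :: "'s \<Rightarrow> real measure"
  proof -
    obtain g1 g2 :: "'s \<Rightarrow> nat \<times> rat list" where "x = XX a b g1" "y = XX a b g2" using xyB unfolding UB by blast
    then show ?thesis using BB_pair[of a b g1 g2] by (intro exI[of _ "Suc (to_nat (g1, g2))"]) auto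
  qed
  show "closed_conv (prod_topology (act_top a b) (act_top a b)) R Rstar"
    if "preference (act_top a b) Rstar \<and> weakly_monotone a b Rstar
         \<and> (\<forall>k\<ge>1. preference (act_top a b) (R k) \<and> weakly_monotone a b (R k)
               \<and> (\<forall>i\<in>{1..k}. choice (R k) (BB a b i) = choice Rstar (BB a b i)))"
    for Rstar R
    using that by (intro conv_lemma[OF assms]) auto
qed


end
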